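(* There exist universal constants $C_4>0$ and $c>0$ such that the following holds. Let $L\ge\mu>0$ with $\kappa=L/\mu>C_4$, let $0<\varepsilon<0.01$ and $D>0$. Then there exist positive integers $T$ and $t$ such that the function $\tilde g:\mathbb{R}^{Tt}\to\mathbb{R}$, $\tilde g(\mathbf{x})=\frac{LT^{-1}D^2}{37}\,g_{T,t}\big(\mathbf{y}-T^{1/2}D^{-1}\mathbf{x}\big)$, is $L$-smooth and satisfies the $\mu$-PL condition, and any first-order zero-respecting algorithm with $\mathbf{x}^{(0)}=\mathbf{0}$ needs at least $c\,\kappa\log\frac1\varepsilon$ gradient computations to find a point $\mathbf{x}$ satisfying $\tilde g(\mathbf{x})-\inf\tilde g\le\varepsilon\,(\tilde g(\mathbf{x}^{(0)})-\inf\tilde g)$ (i.e. the lower bound is $\Omega(\kappa\log\frac1\varepsilon)$).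
   Context: A differentiable $f:\mathbb{R}^d\to\mathbb{R}$ is $L$-smooth if $\|\nabla f(\mathbf{x})-\nabla f(\mathbf{z})\|\le L\|\mathbf{x}-\mathbf{z}\|$ for all $\mathbf{x},\mathbf{z}$; it satisfies the $\mu$-PL condition if $\|\nabla f(\mathbf{x})\|^2\ge2\mu(f(\mathbf{x})-\inf f)$ for all $\mathbf{x}$. For a constant $y>0$ define $v_y:\mathbb{R}\to\mathbb{R}$ by $v_y(x)=\frac12x^2$ if $x\le\frac{31}{32}y$; $v_y(x)=\frac12x^2-16(x-\frac{31}{32}y)^2$ if $\frac{31}{32}y<x\le y$; $v_y(x)=\frac12x^2-\frac{y^2}{32}+16(x-\frac{33}{32}y)^2$ if $y<x\le\frac{33}{32}y$; $v_y(x)=\frac12x^2-\frac{y^2}{32}$ if $x>\frac{33}{32}y$. For $\mathbf{x}\in\mathbb{R}^{Tt}$, with the convention $\mathbf{x}_0=0$, let $q_{T,t}(\mathbf{x})=\frac12\sum_{i=0}^{t-1}\big[(\frac78\mathbf{x}_{iT}-\mathbf{x}_{iT+1})^2+\sum_{j=1}^{T-1}(\mathbf{x}_{iT+j+1}-\mathbf{x}_{iT+j})^2\big]$. Let $\mathbf{y}\in\mathbb{R}^{Tt}$ be given by $\mathbf{y}_{qT+b}=(7/8)^q$ for $q\in\{0,\dots,t-1\}$, $b\in\{1,\dots,T\}$, and $g_{T,t}(\mathbf{x})=q_{T,t}(\mathbf{x})+\sum_{i=1}^{Tt}v_{\mathbf{y}_i}(\mathbf{x}_i)$. A first-order algorithm,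 applied to a differentiable $f:\mathbb{R}^d\to\mathbb{R}$, produces iterates $\mathbf{x}^{(0)},\mathbf{x}^{(1)},\dots$ where each $\mathbf{x}^{(i)}$ is a (deterministic) function of $\mathbf{x}^{(0)},\nabla f(\mathbf{x}^{(0)}),\dots,\mathbf{x}^{(i-1)},\nabla f(\mathbf{x}^{(i-1)})$; producing $\mathbf{x}^{(k)}$ counts as $k$ gradient computations. It is zero-respecting if for every $f$ and $n\ge1$, $\mathrm{supp}(\mathbf{x}^{(n)}-\mathbf{x}^{(0)})\subseteq\bigcup_{i=0}^{n-1}\mathrm{supp}(\nabla f(\mathbf{x}^{(i)}))$, where $\mathrm{supp}(\mathbf{v})=\{i:\mathbf{v}_i\ne0\}$. *)

theory Defs
  imports Complex_Main
begin

text \<open>Points of R^N are encoded as functions nat \<Rightarrow> real whose coordinates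
  are indexed by 1..N and vanish at index 0 and above N.\<close>

definition vecs :: "nat \<Rightarrow> (nat \<Rightarrow> real) set" where
  "vecs N = {x. \<forall>i. (i = 0 \<or> N < i) \<longrightarrow> x i = 0}"

definition vinner :: "nat \<Rightarrow> (nat \<Rightarrow> real) \<Rightarrow> (nat \<Rightarrow> real) \<Rightarrow> real" where
  "vinner N x z = (\<Sum>i=1..N. x i * z i)"

definition vnorm :: "nat \<Rightarrow> (nat \<Rightarrow> real) \<Rightarrow> real" where
  "vnorm N x = sqrt (\<Sum>i=1..N. (x i)^2)"

definition supp :: "(nat \<Rightarrow> real) \<Rightarrow> nat set" where
  "supp v = {i. v i \<noteq> 0}"

definition has_grad :: "nat \<Rightarrow> ((nat \<Rightarrow> real) \<Rightarrow> real) \<Rightarrow> (nat \<Rightarrow> real) \<Rightarrow> (nat \<Rightarrow> real) \<Rightarrow> bool" where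
  "has_grad N f x g \<longleftrightarrow> g \<in> vecs N \<and>
     (\<forall>e>0. \<exists>d>0. \<forall>h\<in>vecs N. vnorm N h < d \<longrightarrow>
        \<bar>f (\<lambda>i. x i + h i) - f x - vinner N g h\<bar> \<le> e * vnorm N h)"

definition grad :: "nat \<Rightarrow> ((nat \<Rightarrow> real) \<Rightarrow> real) \<Rightarrow> (nat \<Rightarrow> real) \<Rightarrow> (nat \<Rightarrow> real)" where
  "grad N f x = (THE g. has_grad N f x g)"

definition differentiable_Rn :: "nat \<Rightarrow> ((nat \<Rightarrow> real) \<Rightarrow> real) \<Rightarrow> bool" where
  "differentiable_Rn N f \<longleftrightarrow> (\<forall>x\<in>vecs N. \<exists>g. has_grad N f x g)"

definition L_smooth :: "nat \<Rightarrow> real \<Rightarrow> ((nat \<Rightarrow> real) \<Rightarrow> real) \<Rightarrow> bool" where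
  "L_smooth N L f \<longleftrightarrow> differentiable_Rn N f \<and>
     (\<forall>x\<in>vecs N. \<forall>z\<in>vecs N. vnorm N (\<lambda>i. grad N f x i - grad N f z i) \<le> L * vnorm N (\<lambda>i. x i - z i))"

definition PL_cond :: "nat \<Rightarrow> real \<Rightarrow> ((nat \<Rightarrow> real) \<Rightarrow> real) \<Rightarrow> bool" where
  "PL_cond N \<mu> f \<longleftrightarrow> differentiable_Rn N f \<and> bdd_below (f ` vecs N) \<and>
     (\<forall>x\<in>vecs N. (vnorm N (grad N f x))^2 \<ge> 2 * \<mu> * (f x - Inf (f ` vecs N)))"

text \<open>A deterministic first-order algorithm: maps the history
  [(x^(0), grad f x^(0)), ..., (x^(i-1), grad f x^(i-1))] (i \<ge> 1) to x^(i).\<close>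
type_synonym fo_alg = "((nat \<Rightarrow> real) \<times> (nat \<Rightarrow> real)) list \<Rightarrow> (nat \<Rightarrow> real)"

fun hist :: "nat \<Rightarrow> fo_alg \<Rightarrow> ((nat \<Rightarrow> real) \<Rightarrow> real) \<Rightarrow> (nat \<Rightarrow> real) \<Rightarrow> nat
             \<Rightarrow> ((nat \<Rightarrow> real) \<times> (nat \<Rightarrow> real)) list" where
  "hist N A f x0 0 = []"
| "hist N A f x0 (Suc k) =
     (let xk = (if k = 0 then x0 else A (hist N A f x0 k)) in hist N A f x0 k @ [(xk, grad N f xk)])"

definition iterate :: "nat \<Rightarrow> fo_alg \<Rightarrow> ((nat \<Rightarrow> real) \<Rightarrow> real) \<Rightarrow> (nat \<Rightarrow> real) \<Rightarrow> nat \<Rightarrow> (nat \<Rightarrow> real)" where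
  "iterate N A f x0 k = (if k = 0 then x0 else A (hist N A f x0 k))"

definition zero_respecting :: "nat \<Rightarrow> fo_alg \<Rightarrow> bool" where
  "zero_respecting N A \<longleftrightarrow> (\<forall>f x0 n. differentiable_Rn N f \<longrightarrow> x0 \<in> vecs N \<longrightarrow> 1 \<le> n \<longrightarrow>
      supp (\<lambda>i. iterate N A f x0 n i - x0 i) \<subseteq> (\<Union>i<n. supp (grad N f (iterate N A f x0 i))))"

definition v_fun :: "real \<Rightarrow> real \<Rightarrow> real" where
  "v_fun y x =
    (if x \<le> 31/32 * y then x^2/2
     else if x \<le> y then x^2/2 - 16 * (x - 31/32 * y)^2
     else if x \<le> 33/32 * y then x^2/2 - y^2/32 + 16 * (x - 33/32 * y)^2
     else x^2/2 - y^2/32)"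

text \<open>q_{T,t}, with the convention x_0 = 0 enforced explicitly.\<close>
definition q_fun :: "nat \<Rightarrow> nat \<Rightarrow> (nat \<Rightarrow> real) \<Rightarrow> real" where
  "q_fun T t x = 1/2 * (\<Sum>i<t.
      (7/8 * (if i*T = 0 then 0 else x (i*T)) - x (i*T+1))^2
      + (\<Sum>j=1..T-1. (x (i*T+j+1) - x (i*T+j))^2))"

definition y_vec :: "nat \<Rightarrow> nat \<Rightarrow> nat \<Rightarrow> real" where
  "y_vec T t i = (if 1 \<le> i \<and> i \<le> T*t then (7/8) ^ ((i - 1) div T) else 0)"

definition g_fun :: "nat \<Rightarrow> nat \<Rightarrow> (nat \<Rightarrow> real) \<Rightarrow> real" where
  "g_fun T t x = q_fun T t x + (\<Sum>i=1..T*t. v_fun (y_vec T t i) (x i))"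

definition g_tilde :: "real \<Rightarrow> real \<Rightarrow> nat \<Rightarrow> nat \<Rightarrow> (nat \<Rightarrow> real) \<Rightarrow> real" where
  "g_tilde L D T t x = L * D^2 / (37 * real T) *
     g_fun T t (\<lambda>i. y_vec T t i - sqrt (real T) / D * x i)"

end

theory Submission
  imports Defs "HOL-Analysis.L2_Norm"
begin

definition vd :: "real \<Rightarrow> real \<Rightarrow> real" where
  "vd y x = (if x \<le> 31/32 * y then x else if x \<le> y then x - 32 * (x - 31/32 * y)
     else if x \<le> 33/32 * y then x + 32 * (x - 33/32 * y) else x)"

definition PP :: "real \<Rightarrow> real" where "PP z = (max z 0)^2"

lemma vd_lip: "y > 0 \<Longrightarrow> \<bar>vd y a - vd y b\<bar> \<le> 33 * \<bar>a - b\<bar>"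
  unfolding vd_def by (auto simp: abs_if split: if_splits)

lemma v_PP: assumes "y > 0" shows
  "v_fun y x = x^2/2 - 16 * PP (x - 31/32*y) + 32 * PP (x - y) - 16 * PP (x - 33/32*y)"
  using assms unfolding v_fun_def PP_def
  by (auto simp: max_def power2_eq_square algebra_simps)

lemma vd_PP: assumes "y > 0" shows
  "vd y x = x - 32 * max (x - 31/32*y) 0 + 64 * max (x - y) 0 - 32 * max (x - 33/32*y) 0"
  using assms unfolding vd_def
  by (auto simp: max_def algebra_simps)

lemma PP_taylor: "PP b - PP a - 2 * max a 0 * (b - a) \<ge> 0 \<and> PP b - PP a - 2 * max a 0 * (b - a) \<le> (b - a)^2"
proof (cases "a \<ge> 0"; cases "b \<ge> 0")
  assume h: "a \<ge> 0" "b \<ge> 0"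
  have "0 \<le> (a-b)^2" by simp
  thus ?thesis using h by (simp add: PP_def max_def power2_eq_square algebra_simps)
next
  assume h: "a \<ge> 0" "\<not> b \<ge> 0"
  have "a * b \<le> 0" using h by (simp add: mult_nonneg_nonpos)
  have e: "PP b = 0" "PP a = a^2" "max a 0 = a" using h by (auto simp: PP_def max_def)
  have "(b - a)^2 = a^2 - 2*(a*b) + b^2" "a^2 - 2*(a*b) = -(a^2) - 2*a*(b-a)" by (auto simp: power2_eq_square algebra_simps)
  moreover have "0 \<le> b^2" by simp
  ultimately show ?thesis using h e \<open>a * b \<le> 0\<close> zero_le_power2[of a] by (simp only: e) linarith
next
  assume h: "\<not> a \<ge> 0" "b \<ge> 0"
  have "b^2 \<le> (b - a)^2" using h by (intro power_mono) auto
  thus ?thesis using h by (simp add: PP_def max_def)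
next
  assume h: "\<not> a \<ge> 0" "\<not> b \<ge> 0"
  thus ?thesis by (simp add: PP_def max_def)
qed

lemma v_taylor: assumes "y > 0" shows "\<bar>v_fun y b - v_fun y a - vd y a * (b - a)\<bar> \<le> 33 * (b - a)^2"
proof -
  define h where "h = b - a"
  have t1: "0 \<le> PP (b - 31/32*y) - PP (a - 31/32*y) - 2 * max (a - 31/32*y) 0 * h"
           "PP (b - 31/32*y) - PP (a - 31/32*y) - 2 * max (a - 31/32*y) 0 * h \<le> h^2"
    using PP_taylor[where a="a - 31/32*y" and b="b - 31/32*y"] unfolding h_def by (auto simp: algebra_simps)
  have t2: "0 \<le> PP (b - y) - PP (a - y) - 2 * max (a - y) 0 * h"
           "PP (b - y) - PP (a - y) - 2 * max (a - y) 0 * h \<le> h^2"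
    using PP_taylor[where a="a - y" and b="b - y"] unfolding h_def by (auto simp: algebra_simps)
  have t3: "0 \<le> PP (b - 33/32*y) - PP (a - 33/32*y) - 2 * max (a - 33/32*y) 0 * h"
           "PP (b - 33/32*y) - PP (a - 33/32*y) - 2 * max (a - 33/32*y) 0 * h \<le> h^2"
    using PP_taylor[where a="a - 33/32*y" and b="b - 33/32*y"] unfolding h_def by (auto simp: algebra_simps)
  have q: "b^2/2 - a^2/2 - a * h = h^2/2" unfolding h_def by (simp add: power2_eq_square algebra_simps)
  have e: "v_fun y b - v_fun y a - vd y a * (b - a) = (b^2/2 - a^2/2 - a * h)
     - 16 * (PP (b - 31/32*y) - PP (a - 31/32*y) - 2 * max (a - 31/32*y) 0 * h)
     + 32 * (PP (b - y) - PP (a - y) - 2 * max (a - y) 0 * h)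
     - 16 * (PP (b - 33/32*y) - PP (a - 33/32*y) - 2 * max (a - 33/32*y) 0 * h)"
    unfolding v_PP[OF assms, of a] v_PP[OF assms, of b] vd_PP[OF assms] h_def by (simp add: algebra_simps)
  have "0 \<le> h^2" by simp
  then show ?thesis unfolding e q using t1 t2 t3 unfolding h_def[symmetric] by (simp add: abs_le_iff)
qed

lemma v_nonneg: assumes "y > 0" shows "v_fun y x \<ge> 0"
proof -
  consider "x \<le> 31/32*y" | "31/32*y < x" "x \<le> y" | "y < x" "x \<le> 33/32*y" | "33/32*y < x" by linarith
  then show ?thesis
  proof cases
    case 1 thus ?thesis by (simp add: v_fun_def)
  next
    case 2
    have a: "(x - 31/32*y)^2 \<le> (y/32)^2" using 2 by (intro power_mono) auto
    have b: "(31/32*y)^2 \<le> x^2" using 2 assms by (intro power_mono) auto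
    have "0 \<le> y^2" by simp
    show ?thesis using 2 a b \<open>0 \<le> y^2\<close> unfolding v_fun_def by (simp add: power_mult_distrib power_divide; linarith)
  next
    case 3
    have b: "y^2 \<le> x^2" using 3 assms by (intro power_mono) auto
    have c: "0 \<le> (x - 33/32*y)^2" "0 \<le> y^2" by simp_all
    have "v_fun y x = x^2/2 - y^2/32 + 16*(x - 33/32*y)^2" using 3 assms by (simp add: v_fun_def)
    thus ?thesis using b c by linarith
  next
    case 4
    have b: "y^2 \<le> x^2" using 4 assms by (intro power_mono) auto
    have "v_fun y x = x^2/2 - y^2/32" using 4 assms by (simp add: v_fun_def)
    thus ?thesis using b zero_le_power2[of y] by linarith
  qed
qed

lemma v_le: assumes "y > 0" shows "v_fun y x \<le> x^2/2"
proof -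
  consider "x \<le> 31/32*y" | "31/32*y < x" "x \<le> y" | "y < x" "x \<le> 33/32*y" | "33/32*y < x" by linarith
  then show ?thesis
  proof cases
    case 1 thus ?thesis by (simp add: v_fun_def)
  next
    case 2 thus ?thesis by (simp add: v_fun_def)
  next
    case 3
    have a: "(x - 33/32*y)^2 \<le> (y/32)^2" using 3 unfolding abs_le_square_iff[symmetric] by (auto simp: abs_if)
    have c: "0 \<le> y^2" by simp
    have "v_fun y x = x^2/2 - y^2/32 + 16*(x - 33/32*y)^2" using 3 assms by (simp add: v_fun_def)
    moreover have "(y/32)^2 = y^2/1024" by (simp add: power_divide)
    ultimately show ?thesis using a c by linarith
  next
    case 4
    show ?thesis using 4 assms by (simp add: v_fun_def)
  qed
qed

lemma v_zero: "v_fun y 0 = 0" if "y > 0" using that by (simp add: v_fun_def)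
lemma v_at_y: "v_fun y y = 31/64 * y^2" if "y > 0" using that by (simp add: v_fun_def power2_eq_square algebra_simps)
lemma vd_at_y: "vd y y = 0" if "y > 0" using that by (simp add: vd_def)
lemma vd_zero: "vd y 0 = 0" if "y > 0" using that by (simp add: vd_def)
lemma vd_nonneg: "x \<ge> 0 \<Longrightarrow> y > 0 \<Longrightarrow> vd y x \<ge> 0" by (auto simp: vd_def)
lemma vd_good: "y > 0 \<Longrightarrow> \<not> (31/32*y < x \<and> x \<le> 33/32*y) \<Longrightarrow> vd y x = x" by (auto simp: vd_def)
lemma vd_neg: "y > 0 \<Longrightarrow> x < 0 \<Longrightarrow> vd y x = x" by (auto simp: vd_def)
lemma vd_bad_bound: "y > 0 \<Longrightarrow> vd y x * x \<ge> 0" 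
  by (cases "x \<ge> 0") (auto simp: vd_neg intro: mult_nonneg_nonneg vd_nonneg)

definition cc :: "nat \<Rightarrow> nat \<Rightarrow> real" where
  "cc T m = (if m \<le> 1 then 0 else if (m - 1) mod T = 0 then 7/8 else 1)"

definition rr :: "nat \<Rightarrow> (nat \<Rightarrow> real) \<Rightarrow> nat \<Rightarrow> real" where
  "rr T u m = u m - cc T m * u (m - 1)"

lemma block_sum: assumes "T > 0"
  shows "(\<Sum>m=T*t+1..T*t+T. (rr T x m)^2) =
    (7/8 * (if t*T = 0 then 0 else x (t*T)) - x (t*T+1))^2 + (\<Sum>j=1..T-1. (x (t*T+j+1) - x (t*T+j))^2)"
proof -
  have "(\<Sum>m=T*t+1..T*t+T. (rr T x m)^2) = (\<Sum>b=1..T. (rr T x (T*t+b))^2)"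
    by (rule sum.reindex_bij_witness[where j="\<lambda>m. m - T*t" and i="\<lambda>b. T*t+b"]) auto
  also have "\<dots> = (rr T x (T*t+1))^2 + (\<Sum>b=2..T. (rr T x (T*t+b))^2)"
    using assms by (subst sum.atLeast_Suc_atMost) (auto simp: numeral_2_eq_2)
  also have "(\<Sum>b=2..T. (rr T x (T*t+b))^2) = (\<Sum>j=1..T-1. (rr T x (T*t+j+1))^2)"
    by (rule sum.reindex_bij_witness[where j="\<lambda>b. b - 1" and i="\<lambda>j. j+1"]) auto
  also have "\<dots> = (\<Sum>j=1..T-1. (x (t*T+j+1) - x (t*T+j))^2)"
  proof (rule sum.cong)
    fix j assume j: "j \<in> {1..T-1}"
    have "(T*t+j) mod T = j" using j by auto
    hence "cc T (T*t+j+1) = 1" using j unfolding cc_def by auto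
    thus "(rr T x (T*t+j+1))^2 = (x (t*T+j+1) - x (t*T+j))^2" unfolding rr_def by (simp add: mult.commute)
  qed simp
  also have "(rr T x (T*t+1))^2 = (7/8 * (if t*T = 0 then 0 else x (t*T)) - x (t*T+1))^2"
  proof -
    have "cc T (T*t+1) = (if t*T = 0 then 0 else 7/8)" unfolding cc_def by auto
    thus ?thesis unfolding rr_def by (auto simp: mult.commute power2_commute)
  qed
  finally show ?thesis .
qed

lemma q_chain: assumes "T > 0" shows "q_fun T t x = 1/2 * (\<Sum>m=1..T*t. (rr T x m)^2)"
proof -
  have "(\<Sum>i<t. (7/8 * (if i*T = 0 then 0 else x (i*T)) - x (i*T+1))^2
      + (\<Sum>j=1..T-1. (x (i*T+j+1) - x (i*T+j))^2)) = (\<Sum>m=1..T*t. (rr T x m)^2)"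
  proof (induction t)
    case 0 thus ?case by simp
  next
    case (Suc t)
    have "{1..T*Suc t} = {1..T*t} \<union> {T*t+1..T*t+T}" by auto
    hence "(\<Sum>m=1..T*Suc t. (rr T x m)^2) = (\<Sum>m=1..T*t. (rr T x m)^2) + (\<Sum>m=T*t+1..T*t+T. (rr T x m)^2)"
      by (simp add: sum.union_disjoint ivl_disj_int)
    thus ?case using Suc block_sum[OF assms, where t=t and x=x] by simp
  qed
  thus ?thesis unfolding q_fun_def by simp
qed

lemma vnorm_L2: "vnorm N x = L2_set x {1..N}"
  unfolding vnorm_def L2_set_def by simp

lemma vnorm_nonneg: "vnorm N x \<ge> 0" unfolding vnorm_def by (intro real_sqrt_ge_zero sum_nonneg) simp

lemma vnorm_sq: "(vnorm N x)^2 = (\<Sum>i=1..N. (x i)^2)"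
  unfolding vnorm_def by (simp add: sum_nonneg del: One_nat_def)

lemma vinner_abs: "\<bar>vinner N x z\<bar> \<le> vnorm N x * vnorm N z"
proof -
  have "\<bar>vinner N x z\<bar> \<le> (\<Sum>i=1..N. \<bar>x i\<bar> * \<bar>z i\<bar>)"
    unfolding vinner_def by (rule order_trans[OF sum_abs]) (simp add: abs_mult)
  also have "\<dots> \<le> L2_set x {1..N} * L2_set z {1..N}" by (rule L2_set_mult_ineq)
  finally show ?thesis by (simp add: vnorm_L2)
qed

lemma vnorm_scale: "vnorm N (\<lambda>i. c * x i) = \<bar>c\<bar> * vnorm N x"
proof -
  have "(\<Sum>i=1..N. (c * x i)^2) = c^2 * (\<Sum>i=1..N. (x i)^2)"
    by (simp add: power_mult_distrib sum_distrib_left)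
  thus ?thesis unfolding vnorm_def by (simp add: real_sqrt_mult)
qed

lemma vnorm_zero_iff: assumes "x \<in> vecs N" shows "vnorm N x = 0 \<longleftrightarrow> x = (\<lambda>_. 0)"
proof
  assume "vnorm N x = 0"
  hence "(\<Sum>i=1..N. (x i)^2) = 0" unfolding vnorm_def by (simp add: sum_nonneg)
  hence "\<forall>i\<in>{1..N}. (x i)^2 = 0" by (subst (asm) sum_nonneg_eq_0_iff) auto
  hence "\<forall>i\<in>{1..N}. x i = 0" by simp
  show "x = (\<lambda>_. 0)"
  proof
    fix i show "x i = 0"
    proof (cases "i \<in> {1..N}")
      case True thus ?thesis using \<open>\<forall>i\<in>{1..N}. x i = 0\<close> by blast
    next
      case False hence "i = 0 \<or> N < i" by auto
      thus ?thesis using assms unfolding vecs_def by blast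
    qed
  qed
qed (simp add: vnorm_def)

lemma has_grad_unique: assumes g1: "has_grad N f x g1" and g2: "has_grad N f x g2" shows "g1 = g2"
proof (rule ccontr)
  assume ne: "g1 \<noteq> g2"
  define dl where "dl = (\<lambda>i. g1 i - g2 i)"
  have dv: "dl \<in> vecs N" using g1 g2 unfolding has_grad_def vecs_def dl_def by auto
  have "dl \<noteq> (\<lambda>_. 0)" using ne unfolding dl_def by (auto simp: fun_eq_iff)
  hence np: "vnorm N dl > 0" using vnorm_zero_iff[OF dv] vnorm_nonneg[of N dl] by linarith
  define e where "e = vnorm N dl / 4"
  have ep: "e > 0" using np unfolding e_def by simp
  obtain d1 where d1: "d1 > 0" "\<forall>h\<in>vecs N. vnorm N h < d1 \<longrightarrow>
        \<bar>f (\<lambda>i. x i + h i) - f x - vinner N g1 h\<bar> \<le> e * vnorm N h"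
    using g1 ep unfolding has_grad_def by blast
  obtain d2 where d2: "d2 > 0" "\<forall>h\<in>vecs N. vnorm N h < d2 \<longrightarrow>
        \<bar>f (\<lambda>i. x i + h i) - f x - vinner N g2 h\<bar> \<le> e * vnorm N h"
    using g2 ep unfolding has_grad_def by blast
  define \<tau> where "\<tau> = min d1 d2 / (2 * vnorm N dl)"
  have tp: "\<tau> > 0" using d1 d2 np unfolding \<tau>_def by simp
  define h where "h = (\<lambda>i. \<tau> * dl i)"
  have hv: "h \<in> vecs N" using dv unfolding h_def vecs_def by auto
  have hn: "vnorm N h = \<tau> * vnorm N dl" unfolding h_def vnorm_scale using tp by simp
  have "vnorm N h = min d1 d2 / 2" unfolding hn \<tau>_def using np by simp
  hence hs: "vnorm N h < d1" "vnorm N h < d2" using d1 d2 by linarith+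
  have a1: "\<bar>f (\<lambda>i. x i + h i) - f x - vinner N g1 h\<bar> \<le> e * vnorm N h" using d1 hv hs by blast
  have a2: "\<bar>f (\<lambda>i. x i + h i) - f x - vinner N g2 h\<bar> \<le> e * vnorm N h" using d2 hv hs by blast
  have "vinner N g1 h - vinner N g2 h = vinner N dl h"
    unfolding vinner_def dl_def by (simp add: sum_subtractf[symmetric] algebra_simps)
  also have "\<dots> = \<tau> * (vnorm N dl)^2"
    unfolding vinner_def h_def vnorm_sq sum_distrib_left by (rule sum.cong) (auto simp: power2_eq_square)
  finally have eq: "vinner N g1 h - vinner N g2 h = \<tau> * (vnorm N dl)^2" .
  have "\<tau> * (vnorm N dl)^2 \<le> 2 * e * vnorm N h" using a1 a2 eq unfolding abs_le_iff by linarith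
  also have "\<dots> = \<tau> * (vnorm N dl)^2 / 2" unfolding hn e_def by (simp add: power2_eq_square)
  finally have "\<tau> * (vnorm N dl)^2 \<le> \<tau> * (vnorm N dl)^2 / 2" .
  moreover have "\<tau> * (vnorm N dl)^2 > 0" using tp np by simp
  ultimately show False by linarith
qed

lemma grad_eq: "has_grad N f x g \<Longrightarrow> grad N f x = g"
  unfolding grad_def using has_grad_unique by blast

definition qg :: "nat \<Rightarrow> nat \<Rightarrow> (nat \<Rightarrow> real) \<Rightarrow> nat \<Rightarrow> real" where
  "qg T N u m = rr T u m - (if m < N then cc T (m+1) * rr T u (m+1) else 0)"

definition Gg :: "nat \<Rightarrow> nat \<Rightarrow> (nat \<Rightarrow> real) \<Rightarrow> nat \<Rightarrow> real" where
  "Gg T t u m = (if 1 \<le> m \<and> m \<le> T*t then qg T (T*t) u m + vd (y_vec T t m) (u m) else 0)"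

lemma cc_1: "cc T (Suc 0) = 0" unfolding cc_def by simp

lemma sbp: "(\<Sum>m=1..N. a m * rr T k m) = (\<Sum>m=1..N. (a m - (if m < N then cc T (m+1) * a (m+1) else 0)) * k m)"
proof (induction N)
  case 0 thus ?case by simp
next
  case (Suc N)
  have "(\<Sum>m=1..Suc N. (a m - (if m < Suc N then cc T (m+1) * a (m+1) else 0)) * k m)
     = (\<Sum>m=1..N. (a m - (if m < Suc N then cc T (m+1) * a (m+1) else 0)) * k m) + a (Suc N) * k (Suc N)"
    by simp
  also have "(\<Sum>m=1..N. (a m - (if m < Suc N then cc T (m+1) * a (m+1) else 0)) * k m)
     = (\<Sum>m=1..N. (a m - (if m < N then cc T (m+1) * a (m+1) else 0)) * k m)
       - (if N \<ge> 1 then cc T (Suc N) * a (Suc N) * k N else 0)"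
  proof (cases "N \<ge> 1")
    case True
    have s1: "(\<Sum>m=1..N. f m) = (\<Sum>m=1..N-1. f m) + f N" for f :: "nat \<Rightarrow> real"
      using True by (cases N) (auto simp: sum.cl_ivl_Suc)
    show ?thesis using True
      apply (subst (1 2) s1)
      apply (subgoal_tac "(\<Sum>m=1..N-1. (a m - (if m < Suc N then cc T (m+1) * a (m+1) else 0)) * k m)
         = (\<Sum>m=1..N-1. (a m - (if m < N then cc T (m+1) * a (m+1) else 0)) * k m)")
       apply (simp add: algebra_simps)
      by (rule sum.cong) auto
  next
    case False thus ?thesis by simp
  qed
  finally have r: "(\<Sum>m=1..Suc N. (a m - (if m < Suc N then cc T (m+1) * a (m+1) else 0)) * k m)
     = (\<Sum>m=1..N. (a m - (if m < N then cc T (m+1) * a (m+1) else 0)) * k m)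
       - (if N \<ge> 1 then cc T (Suc N) * a (Suc N) * k N else 0) + a (Suc N) * k (Suc N)" .
  have l: "(\<Sum>m=1..Suc N. a m * rr T k m) = (\<Sum>m=1..N. a m * rr T k m) + a (Suc N) * (k (Suc N) - cc T (Suc N) * k N)"
    by (simp add: rr_def)
  have "N = 0 \<Longrightarrow> cc T (Suc N) = 0" by (simp add: cc_1)
  thus ?case unfolding r l Suc.IH by (cases "N \<ge> 1") (auto simp: algebra_simps)
qed

lemma rr_add: "rr T (\<lambda>i. u i + k i) m = rr T u m + rr T k m"
  unfolding rr_def by (simp add: algebra_simps)

lemma cc_bound: "\<bar>cc T m\<bar> \<le> 1" unfolding cc_def by auto

lemma sq_sum_shift: fixes k :: "nat \<Rightarrow> real" shows "(\<Sum>m=1..N. (if m \<ge> 2 then (k (m-1))^2 else 0)) \<le> (\<Sum>m=1..N. (k m)^2)"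
proof (cases "N \<ge> 1")
  case True
  have "(\<Sum>m=1..N. (if m \<ge> 2 then (k (m-1))^2 else 0)) = (\<Sum>m=2..N. (k (m-1))^2)"
    by (rule sum.mono_neutral_cong_right) auto
  also have "\<dots> = (\<Sum>m=1..N-1. (k m)^2)"
    by (rule sum.reindex_bij_witness[where j="\<lambda>m. m - 1" and i="\<lambda>m. m + 1"]) auto
  also have "\<dots> \<le> (\<Sum>m=1..N. (k m)^2)" by (rule sum_mono2) auto
  finally show ?thesis .
qed simp

lemma rr_sq_bound: "(\<Sum>m=1..N. (rr T k m)^2) \<le> 4 * (\<Sum>m=1..N. (k m)^2)"
proof -
  have "(rr T k m)^2 \<le> 2 * (k m)^2 + 2 * (if m \<ge> 2 then (k (m-1))^2 else 0)" for m
  proof -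
    have "(cc T m * k (m-1))^2 \<le> (if m \<ge> 2 then (k (m-1))^2 else 0)"
    proof (cases "m \<ge> 2")
      case True
      have "(cc T m)^2 \<le> 1" using cc_bound[of T m] abs_le_square_iff[of "cc T m" 1] by simp
      hence "(cc T m)^2 * (k (m-1))^2 \<le> 1 * (k (m-1))^2" by (intro mult_right_mono) auto
      thus ?thesis using True by (simp add: power_mult_distrib)
    next
      case False thus ?thesis unfolding cc_def by simp
    qed
    moreover have "(a - b)^2 \<le> 2 * a^2 + 2 * b^2" for a b :: real
    proof -
      have "0 \<le> (a + b)^2" by simp
      thus ?thesis by (simp add: power2_eq_square algebra_simps)
    qed
    ultimately show ?thesis unfolding rr_def by (smt (verit))
  qed
  hence "(\<Sum>m=1..N. (rr T k m)^2) \<le> (\<Sum>m=1..N. 2 * (k m)^2 + 2 * (if m \<ge> 2 then (k (m-1))^2 else 0))"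
    by (intro sum_mono) auto
  also have "\<dots> = 2 * (\<Sum>m=1..N. (k m)^2) + 2 * (\<Sum>m=1..N. (if m \<ge> 2 then (k (m-1))^2 else 0))"
    by (simp add: sum.distrib sum_distrib_left)
  also have "\<dots> \<le> 4 * (\<Sum>m=1..N. (k m)^2)" using sq_sum_shift[where N=N and k=k] by simp
  finally show ?thesis .
qed

lemma y_pos: "1 \<le> m \<Longrightarrow> m \<le> T*t \<Longrightarrow> y_vec T t m > 0" unfolding y_vec_def by simp

lemma g_chain: assumes "T > 0"
  shows "g_fun T t u = 1/2 * (\<Sum>m=1..T*t. (rr T u m)^2) + (\<Sum>m=1..T*t. v_fun (y_vec T t m) (u m))"
  unfolding g_fun_def q_chain[OF assms] ..

lemma g_taylor: assumes "T > 0"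
  shows "g_fun T t (\<lambda>i. u i + k i) - g_fun T t u - (\<Sum>m=1..T*t. Gg T t u m * k m)
    = 1/2 * (\<Sum>m=1..T*t. (rr T k m)^2)
      + (\<Sum>m=1..T*t. v_fun (y_vec T t m) (u m + k m) - v_fun (y_vec T t m) (u m) - vd (y_vec T t m) (u m) * k m)"
proof -
  define N where "N = T*t"
  have a: "(\<Sum>m=1..N. (rr T (\<lambda>i. u i + k i) m)^2) - (\<Sum>m=1..N. (rr T u m)^2)
      = 2 * (\<Sum>m=1..N. rr T u m * rr T k m) + (\<Sum>m=1..N. (rr T k m)^2)"
    unfolding rr_add by (simp add: power2_eq_square algebra_simps sum.distrib sum_distrib_left sum_subtractf)
  have b: "(\<Sum>m=1..N. Gg T t u m * k m) = (\<Sum>m=1..N. rr T u m * rr T k m) + (\<Sum>m=1..N. vd (y_vec T t m) (u m) * k m)"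
  proof -
    have "(\<Sum>m=1..N. Gg T t u m * k m) = (\<Sum>m=1..N. qg T N u m * k m + vd (y_vec T t m) (u m) * k m)"
      by (rule sum.cong) (auto simp: Gg_def N_def algebra_simps)
    also have "\<dots> = (\<Sum>m=1..N. qg T N u m * k m) + (\<Sum>m=1..N. vd (y_vec T t m) (u m) * k m)"
      by (simp add: sum.distrib)
    also have "(\<Sum>m=1..N. qg T N u m * k m) = (\<Sum>m=1..N. rr T u m * rr T k m)"
      unfolding sbp[where a="rr T u"] qg_def ..
    finally show ?thesis .
  qed
  show ?thesis unfolding g_chain[OF assms] N_def[symmetric] using a b
    by (simp add: algebra_simps sum.distrib sum_subtractf)
qed

lemma g_taylor_bound: assumes "T > 0"
  shows "\<bar>g_fun T t (\<lambda>i. u i + k i) - g_fun T t u - (\<Sum>m=1..T*t. Gg T t u m * k m)\<bar>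
     \<le> 35 * (\<Sum>m=1..T*t. (k m)^2)"
proof -
  define N where "N = T*t"
  have "\<bar>\<Sum>m=1..N. v_fun (y_vec T t m) (u m + k m) - v_fun (y_vec T t m) (u m) - vd (y_vec T t m) (u m) * k m\<bar>
     \<le> (\<Sum>m=1..N. 33 * (k m)^2)"
    apply (rule order_trans[OF sum_abs], rule sum_mono)
  proof -
    fix m assume "m \<in> {1..N}"
    hence "y_vec T t m > 0" using y_pos unfolding N_def by auto
    from v_taylor[OF this, of "u m + k m" "u m"]
    show "\<bar>v_fun (y_vec T t m) (u m + k m) - v_fun (y_vec T t m) (u m) - vd (y_vec T t m) (u m) * k m\<bar> \<le> 33 * (k m)^2"
      by simp
  qed
  moreover have "0 \<le> (\<Sum>m=1..N. (rr T k m)^2)" by (intro sum_nonneg) auto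
  moreover note rr_sq_bound[where N=N and T=T and k=k]
  moreover have "(\<Sum>m=1..N. 33 * (k m)^2) = 33 * (\<Sum>m=1..N. (k m)^2)" by (simp add: sum_distrib_left)
  moreover have "g_fun T t (\<lambda>i. u i + k i) - g_fun T t u - (\<Sum>m=1..N. Gg T t u m * k m)
    = 1/2 * (\<Sum>m=1..N. (rr T k m)^2)
      + (\<Sum>m=1..N. v_fun (y_vec T t m) (u m + k m) - v_fun (y_vec T t m) (u m) - vd (y_vec T t m) (u m) * k m)"
    unfolding N_def by (rule g_taylor[OF assms])
  ultimately show ?thesis unfolding N_def[symmetric] by (simp only: abs_le_iff) linarith
qed

lemma vnorm_le_sq: assumes "(\<Sum>i=1..N. (f i)^2) \<le> c^2 * (\<Sum>i=1..N. (g i)^2)" "c \<ge> 0"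
  shows "vnorm N f \<le> c * vnorm N g"
proof -
  have "vnorm N f \<le> sqrt (c^2 * (\<Sum>i=1..N. (g i)^2))" unfolding vnorm_def using assms(1) by simp
  also have "\<dots> = c * vnorm N g" unfolding vnorm_def using assms(2) by (simp add: real_sqrt_mult)
  finally show ?thesis .
qed

lemma vnorm_triangle: "vnorm N (\<lambda>i. f i + g i) \<le> vnorm N f + vnorm N g"
  unfolding vnorm_L2 by (rule L2_set_triangle_ineq)

lemma vnorm_minus: "vnorm N (\<lambda>i. - f i) = vnorm N f"
  unfolding vnorm_def by simp

lemma vnorm_diff: "vnorm N (\<lambda>i. f i - g i) \<le> vnorm N f + vnorm N g"
  using vnorm_triangle[of N f "\<lambda>i. - g i"] vnorm_minus[of N g] by simp

lemma vnorm_cong: "(\<And>i. 1 \<le> i \<Longrightarrow> i \<le> N \<Longrightarrow> f i = g i) \<Longrightarrow> vnorm N f = vnorm N g"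
  unfolding vnorm_def by (metis (no_types, lifting) atLeastAtMost_iff sum.cong)

lemma vnorm_pointwise: assumes "\<And>i. 1 \<le> i \<Longrightarrow> i \<le> N \<Longrightarrow> \<bar>f i\<bar> \<le> c * \<bar>g i\<bar>" "c \<ge> 0"
  shows "vnorm N f \<le> c * vnorm N g"
proof (rule vnorm_le_sq[OF _ assms(2)])
  have "(f i)^2 \<le> (c * g i)^2" if "i \<in> {1..N}" for i
    using assms(1)[of i] that assms(2) by (simp add: abs_le_square_iff[symmetric] abs_mult)
  hence "(\<Sum>i=1..N. (f i)^2) \<le> (\<Sum>i=1..N. (c * g i)^2)" by (intro sum_mono) auto
  thus "(\<Sum>i=1..N. (f i)^2) \<le> c^2 * (\<Sum>i=1..N. (g i)^2)" by (simp add: power_mult_distrib sum_distrib_left)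
qed

lemma qg_norm: "vnorm N (qg T N d) \<le> 4 * vnorm N d"
proof -
  have a: "vnorm N (rr T d) \<le> 2 * vnorm N d"
    by (rule vnorm_le_sq) (use rr_sq_bound[where N=N and T=T and k=d] in auto)
  have b: "vnorm N (\<lambda>m. if m < N then cc T (m+1) * rr T d (m+1) else 0) \<le> 1 * vnorm N (rr T d)"
  proof (rule vnorm_le_sq)
    have "(\<Sum>m=1..N. (if m < N then cc T (m+1) * rr T d (m+1) else 0)^2)
        \<le> (\<Sum>m=1..N. (if m < N then (rr T d (m+1))^2 else 0))"
    proof (rule sum_mono)
      fix m
      have "(cc T (m+1))^2 \<le> 1" using cc_bound[of T "m+1"] abs_le_square_iff[of "cc T (m+1)" 1] by simp
      hence "(cc T (m+1))^2 * (rr T d (m+1))^2 \<le> 1 * (rr T d (m+1))^2" by (intro mult_right_mono) auto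
      thus "(if m < N then cc T (m+1) * rr T d (m+1) else 0)^2 \<le> (if m < N then (rr T d (m+1))^2 else 0)"
        by (simp add: power_mult_distrib)
    qed
    also have "\<dots> \<le> (\<Sum>m=1..N. (rr T d m)^2)"
    proof (cases "N \<ge> 1")
      case True
      have "(\<Sum>m=1..N. (if m < N then (rr T d (m+1))^2 else 0)) = (\<Sum>m=1..N-1. (rr T d (m+1))^2)"
        by (rule sum.mono_neutral_cong_right) auto
      also have "\<dots> = (\<Sum>m=2..N. (rr T d m)^2)"
        by (rule sum.reindex_bij_witness[where j="\<lambda>m. m + 1" and i="\<lambda>m. m - 1"]) auto
      also have "\<dots> \<le> (\<Sum>m=1..N. (rr T d m)^2)" by (rule sum_mono2) auto
      finally show ?thesis .
    qed simp
    finally show "(\<Sum>m=1..N. (if m < N then cc T (m+1) * rr T d (m+1) else 0)^2) \<le> 1^2 * (\<Sum>m=1..N. (rr T d m)^2)"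
      by simp
  qed simp
  have "vnorm N (qg T N d) \<le> vnorm N (rr T d) + vnorm N (\<lambda>m. if m < N then cc T (m+1) * rr T d (m+1) else 0)"
    unfolding qg_def by (rule vnorm_diff)
  thus ?thesis using a b by simp
qed

lemma qg_diff: "qg T N u m - qg T N u' m = qg T N (\<lambda>i. u i - u' i) m"
  unfolding qg_def rr_def by (simp add: algebra_simps)

lemma Gg_lip: assumes "T > 0"
  shows "vnorm (T*t) (\<lambda>i. Gg T t u i - Gg T t u' i) \<le> 37 * vnorm (T*t) (\<lambda>i. u i - u' i)"
proof -
  define N where "N = T*t"
  define d where "d = (\<lambda>i. u i - u' i)"
  have "vnorm N (\<lambda>i. Gg T t u i - Gg T t u' i) = vnorm N (\<lambda>i. qg T N d i + (vd (y_vec T t i) (u i) - vd (y_vec T t i) (u' i)))"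
    by (rule vnorm_cong) (auto simp: Gg_def N_def d_def qg_diff[symmetric] algebra_simps)
  also have "\<dots> \<le> vnorm N (qg T N d) + vnorm N (\<lambda>i. vd (y_vec T t i) (u i) - vd (y_vec T t i) (u' i))"
    by (rule vnorm_triangle)
  also have "vnorm N (\<lambda>i. vd (y_vec T t i) (u i) - vd (y_vec T t i) (u' i)) \<le> 33 * vnorm N d"
    by (rule vnorm_pointwise) (auto simp: d_def N_def intro!: vd_lip y_pos)
  finally show ?thesis using qg_norm[of N T d] unfolding N_def d_def by simp
qed

definition sc :: "real \<Rightarrow> real \<Rightarrow> nat \<Rightarrow> real" where "sc L D T = L * D^2 / (37 * real T)"
definition be :: "real \<Rightarrow> nat \<Rightarrow> real" where "be D T = sqrt (real T) / D"
definition ug :: "nat \<Rightarrow> nat \<Rightarrow> real \<Rightarrow> (nat \<Rightarrow> real) \<Rightarrow> nat \<Rightarrow> real" where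
  "ug T t D x = (\<lambda>i. y_vec T t i - be D T * x i)"
definition Gt :: "real \<Rightarrow> real \<Rightarrow> nat \<Rightarrow> nat \<Rightarrow> (nat \<Rightarrow> real) \<Rightarrow> nat \<Rightarrow> real" where
  "Gt L D T t x = (\<lambda>i. - (sc L D T * be D T) * Gg T t (ug T t D x) i)"

lemma gt_eq: "g_tilde L D T t x = sc L D T * g_fun T t (ug T t D x)"
  unfolding g_tilde_def sc_def ug_def be_def ..

lemma sc_be: assumes "T > 0" "D > 0" shows "sc L D T * (be D T)^2 = L / 37"
  unfolding sc_def be_def using assms by (simp add: power_divide field_simps)

lemma Gg_vecs: "Gg T t u \<in> vecs (T*t)" unfolding vecs_def Gg_def by auto

lemma Gt_vecs: "Gt L D T t x \<in> vecs (T*t)" using Gg_vecs unfolding vecs_def Gt_def by auto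

lemma gt_has_grad: assumes T: "T > 0" and L: "L > 0" and D: "D > 0"
  shows "has_grad (T*t) (g_tilde L D T t) x (Gt L D T t x)"
  unfolding has_grad_def
proof (intro conjI allI impI ballI)
  show "Gt L D T t x \<in> vecs (T*t)" by (rule Gt_vecs)
  fix e :: real assume e: "e > 0"
  define N where "N = T*t"
  define K where "K = sc L D T * 35 * (be D T)^2"
  have sp: "sc L D T > 0" unfolding sc_def using T L D by simp
  have K0: "K \<ge> 0" unfolding K_def using sp by simp
  define d where "d = e / (K + 1)"
  have d0: "d > 0" unfolding d_def using e K0 by simp
  show "\<exists>d>0. \<forall>h\<in>vecs (T*t). vnorm (T*t) h < d \<longrightarrow>
        \<bar>g_tilde L D T t (\<lambda>i. x i + h i) - g_tilde L D T t x - vinner (T*t) (Gt L D T t x) h\<bar> \<le> e * vnorm (T*t) h"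
  proof (intro exI[of _ d] conjI ballI impI d0)
    fix h assume hv: "h \<in> vecs (T*t)" and hn: "vnorm (T*t) h < d"
    define u where "u = ug T t D x"
    define k where "k = (\<lambda>i. - be D T * h i)"
    have ux: "ug T t D (\<lambda>i. x i + h i) = (\<lambda>i. u i + k i)"
      unfolding u_def k_def ug_def by (auto simp: algebra_simps)
    have inn: "vinner (T*t) (Gt L D T t x) h = sc L D T * (\<Sum>m=1..T*t. Gg T t u m * k m)"
      unfolding vinner_def Gt_def k_def u_def sum_distrib_left by (rule sum.cong) auto
    have ks: "(\<Sum>m=1..T*t. (k m)^2) = (be D T)^2 * (vnorm (T*t) h)^2"
      unfolding k_def vnorm_sq by (simp add: power_mult_distrib sum_distrib_left)
    have "\<bar>g_tilde L D T t (\<lambda>i. x i + h i) - g_tilde L D T t x - vinner (T*t) (Gt L D T t x) h\<bar>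
        = sc L D T * \<bar>g_fun T t (\<lambda>i. u i + k i) - g_fun T t u - (\<Sum>m=1..T*t. Gg T t u m * k m)\<bar>"
      unfolding gt_eq ux inn u_def[symmetric] using sp by (simp add: abs_mult right_diff_distrib[symmetric])
    also have "\<dots> \<le> sc L D T * (35 * (\<Sum>m=1..T*t. (k m)^2))"
      using g_taylor_bound[OF T, of t u k] sp by (intro mult_left_mono) auto
    also have "\<dots> = K * vnorm (T*t) h * vnorm (T*t) h" unfolding ks K_def by (simp add: power2_eq_square)
    also have "\<dots> \<le> K * d * vnorm (T*t) h"
      using hn K0 vnorm_nonneg[of "T*t" h] by (intro mult_right_mono mult_left_mono) auto
    also have "K * d \<le> e" unfolding d_def using K0 e by (simp add: field_simps)
    hence "K * d * vnorm (T*t) h \<le> e * vnorm (T*t) h" using vnorm_nonneg[of "T*t" h] by (intro mult_right_mono) auto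
    finally show "\<bar>g_tilde L D T t (\<lambda>i. x i + h i) - g_tilde L D T t x - vinner (T*t) (Gt L D T t x) h\<bar> \<le> e * vnorm (T*t) h" .
  qed
qed

lemma gt_grad: "T > 0 \<Longrightarrow> L > 0 \<Longrightarrow> D > 0 \<Longrightarrow> grad (T*t) (g_tilde L D T t) x = Gt L D T t x"
  by (rule grad_eq[OF gt_has_grad])

lemma gt_diff: "T > 0 \<Longrightarrow> L > 0 \<Longrightarrow> D > 0 \<Longrightarrow> differentiable_Rn (T*t) (g_tilde L D T t)"
  unfolding differentiable_Rn_def using gt_has_grad by blast

lemma gt_smooth: assumes T: "T > 0" and L: "L > 0" and D: "D > 0"
  shows "L_smooth (T*t) L (g_tilde L D T t)"
  unfolding L_smooth_def
proof (intro conjI ballI)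
  show "differentiable_Rn (T*t) (g_tilde L D T t)" by (rule gt_diff[OF assms])
  fix x z
  have sp: "sc L D T > 0" unfolding sc_def using T L D by simp
  have bp: "be D T > 0" unfolding be_def using T D by simp
  have "vnorm (T*t) (\<lambda>i. grad (T*t) (g_tilde L D T t) x i - grad (T*t) (g_tilde L D T t) z i)
      = vnorm (T*t) (\<lambda>i. (- (sc L D T * be D T)) * (Gg T t (ug T t D x) i - Gg T t (ug T t D z) i))"
    unfolding gt_grad[OF assms] Gt_def by (simp add: algebra_simps)
  also have "\<dots> = sc L D T * be D T * vnorm (T*t) (\<lambda>i. Gg T t (ug T t D x) i - Gg T t (ug T t D z) i)"
    unfolding vnorm_scale using sp bp by simp
  also have "\<dots> \<le> sc L D T * be D T * (37 * vnorm (T*t) (\<lambda>i. ug T t D x i - ug T t D z i))"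
    using Gg_lip[OF T] sp bp by (intro mult_left_mono) auto
  also have "vnorm (T*t) (\<lambda>i. ug T t D x i - ug T t D z i) = be D T * vnorm (T*t) (\<lambda>i. x i - z i)"
  proof -
    have "vnorm (T*t) (\<lambda>i. ug T t D x i - ug T t D z i) = vnorm (T*t) (\<lambda>i. (- be D T) * (x i - z i))"
      unfolding ug_def by (simp add: algebra_simps)
    thus ?thesis unfolding vnorm_scale using bp by simp
  qed
  also have "sc L D T * be D T * (37 * (be D T * vnorm (T*t) (\<lambda>i. x i - z i)))
      = 37 * (sc L D T * (be D T)^2) * vnorm (T*t) (\<lambda>i. x i - z i)" by (simp add: power2_eq_square)
  also have "\<dots> = L * vnorm (T*t) (\<lambda>i. x i - z i)" unfolding sc_be[OF T D] by simp
  finally show "vnorm (T*t) (\<lambda>i. grad (T*t) (g_tilde L D T t) x i - grad (T*t) (g_tilde L D T t) z i)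
      \<le> L * vnorm (T*t) (\<lambda>i. x i - z i)" .
qed

definition bad :: "real \<Rightarrow> bool" where "bad r \<longleftrightarrow> 31/32 < r \<and> r \<le> 33/32"

lemma chain_key:
  fixes a \<rho> \<psi> e W c :: "nat \<Rightarrow> real" and N s :: nat
  assumes r0: "\<rho> 0 = 0"
    and ra: "\<And>m. 1 \<le> m \<Longrightarrow> m \<le> N \<Longrightarrow> \<rho> m = \<rho> (m-1) + a m"
    and R1: "\<And>m. 1 \<le> m \<Longrightarrow> m < N \<Longrightarrow> c (m+1) * a (m+1) = a m + \<psi> m - e m"
    and R2: "a N + \<psi> N - e N = 0"
    and cb: "\<And>m. 2 \<le> m \<Longrightarrow> m \<le> N \<Longrightarrow> 0 < c m \<and> c m \<le> 1"
    and Wp: "\<And>m. 1 \<le> m \<Longrightarrow> m \<le> N \<Longrightarrow> W m > 0"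
    and Wc: "\<And>m. 1 \<le> m \<Longrightarrow> m < N \<Longrightarrow> W (m+1) \<ge> 49/64 * W m"
    and Wmono: "\<And>m n. 1 \<le> m \<Longrightarrow> m \<le> n \<Longrightarrow> n \<le> N \<Longrightarrow> W n \<le> W m"
    and good: "\<And>m. 1 \<le> m \<Longrightarrow> m \<le> N \<Longrightarrow> \<not> bad (\<rho> m) \<Longrightarrow> \<psi> m = \<rho> m"
    and psinn: "\<And>m. 1 \<le> m \<Longrightarrow> m \<le> N \<Longrightarrow> \<rho> m \<ge> 0 \<Longrightarrow> \<psi> m \<ge> 0"
    and s: "1 \<le> s" "s \<le> N" "bad (\<rho> s)" "\<And>j. 1 \<le> j \<Longrightarrow> j < s \<Longrightarrow> \<not> bad (\<rho> j)"
  shows "\<exists>m\<in>{1..N}. W m * (e m)^2 \<ge> W s / 1024"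
proof (rule ccontr)
  assume "\<not> ?thesis"
  hence small: "\<And>m. 1 \<le> m \<Longrightarrow> m \<le> N \<Longrightarrow> W m * (e m)^2 < W s / 1024" by force
  have Ws: "W s > 0" using Wp s by auto
  have esmall: "e m < 1/32" if m: "1 \<le> m" "m \<le> s" for m
  proof -
    have "W s \<le> W m" using Wmono m s by auto
    hence "W s * (e m)^2 \<le> W m * (e m)^2" by (intro mult_right_mono) auto
    hence "W s * (e m)^2 < W s * (1/32)^2" using small[of m] m s by (simp add: power_divide)
    hence "(e m)^2 < (1/32)^2" using Ws by simp
    thus ?thesis by (rule power2_less_imp_less) simp
  qed
  have rs: "31/32 < \<rho> s" "\<rho> s \<le> 33/32" using s(3) unfolding bad_def by auto
  show False
  proof (cases "a s \<le> 1/4")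
    case True
    have s2: "s \<ge> 2"
    proof (rule ccontr)
      assume "\<not> s \<ge> 2" hence "s = 1" using s by auto
      thus False using ra[of 1] r0 rs True s by simp
    qed
    have P: "\<rho> (s-1-n) \<ge> 23/32 \<and> a (s-1-n) < 0" if "n < s - 1" for n
      using that
    proof (induction n)
      case 0
      have r1: "\<rho> (s-1) \<ge> 23/32" using ra[of s] s True rs by simp
      have g1: "\<psi> (s-1) = \<rho> (s-1)" using good[of "s-1"] s(4)[of "s-1"] s s2 by auto
      have c1: "c s * a s \<le> 1/4"
      proof (cases "a s \<ge> 0")
        case True
        have "c s * a s \<le> 1 * a s" using cb[of s] s2 s True by (intro mult_right_mono) auto
        thus ?thesis using \<open>a s \<le> 1/4\<close> by simp
      next
        case False
        hence "c s * a s \<le> 0" using cb[of s] s2 s by (simp add: mult_nonneg_nonpos)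
        thus ?thesis by simp
      qed
      have "c (s-1+1) * a (s-1+1) = a (s-1) + \<psi> (s-1) - e (s-1)" using R1[of "s-1"] s s2 by simp
      hence "a (s-1) = c s * a s - \<psi> (s-1) + e (s-1)" using s2 by simp
      moreover have "e (s-1) < 1/32" using esmall[of "s-1"] s2 by simp
      ultimately show ?case using r1 g1 c1 by simp
    next
      case (Suc n)
      define j where "j = s - 1 - n"
      have j: "j \<ge> 2" "j < s" "s - 1 - Suc n = j - 1" using Suc.prems unfolding j_def by auto
      have IH: "\<rho> j \<ge> 23/32" "a j < 0" using Suc unfolding j_def by auto
      have r1: "\<rho> (j-1) \<ge> 23/32" using ra[of j] j s IH by simp
      have g1: "\<psi> (j-1) = \<rho> (j-1)" using good[of "j-1"] s(4)[of "j-1"] s j by auto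
      have c1: "c j * a j \<le> 0" using cb[of j] j s IH by (intro mult_nonneg_nonpos) auto
      have "c (j-1+1) * a (j-1+1) = a (j-1) + \<psi> (j-1) - e (j-1)" using R1[of "j-1"] s j by simp
      hence "a (j-1) = c j * a j - \<psi> (j-1) + e (j-1)" using j by simp
      moreover have "e (j-1) < 1/32" using esmall[of "j-1"] j by simp
      ultimately show ?case using r1 g1 c1 j by simp
    qed
    from P[of "s-2"] s2 have "a 1 < 0" "\<rho> 1 \<ge> 23/32"
      by (simp_all add: numeral_2_eq_2 Suc_diff_Suc)
    moreover have "\<rho> 1 = a 1" using ra[of 1] r0 s by simp
    ultimately show False by simp
  next
    case False
    have psis: "\<psi> s \<ge> 0" using psinn[of s] s rs by simp
    show False
    proof (cases "s = N")
      case True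
      have "e N > 1/4" using R2 False psis True by simp
      hence "(1/4)^2 < (e N)^2" by (intro power_strict_mono) auto
      hence "W N * (1/4)^2 \<le> W N * (e N)^2" using Wp[of N] s by (intro mult_left_mono) auto
      moreover have "W s / 1024 \<le> W N * (1/4)^2" using True Ws by (simp add: power_divide)
      ultimately show False using small[of N] s by simp
    next
      case False2: False
      have sN: "s < N" using False2 s by simp
      have "c (s+1) * a (s+1) = a s + \<psi> s - e s" using R1[of s] s sN by simp
      moreover have "e s < 1/32" using esmall[of s] s by simp
      ultimately have ca: "c (s+1) * a (s+1) > 7/32" using False psis by simp
      have cs1: "0 < c (s+1)" "c (s+1) \<le> 1" using cb[of "s+1"] s sN by auto
      have as1: "a (s+1) > 7/32"
      proof -
        have "0 < c (s+1) * a (s+1)" using ca by linarith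
        hence "a (s+1) > 0" using cs1 by (simp add: zero_less_mult_iff)
        hence "c (s+1) * a (s+1) \<le> 1 * a (s+1)" using cs1 by (intro mult_right_mono) auto
        thus ?thesis using ca by simp
      qed
      have r1: "\<rho> (s+1) > 33/32" using ra[of "s+1"] sN as1 rs by simp
      have Ws1: "W (s+1) \<ge> 49/64 * W s" using Wc[of s] s sN by simp
      define B where "B = W (s+1) * (\<rho> (s+1))^2"
      have B: "B \<ge> 49/64 * W s"
      proof -
        have "(1::real) \<le> (\<rho> (s+1))^2" using r1 by (simp add: one_le_power)
        hence "W (s+1) * 1 \<le> W (s+1) * (\<rho> (s+1))^2" using Wp[of "s+1"] sN by (intro mult_left_mono) auto
        thus ?thesis unfolding B_def using Ws1 by simp
      qed
      have ehalf: "e m < \<rho> m / 2" if m: "1 \<le> m" "m \<le> N" "W m * (\<rho> m)^2 \<ge> B" "\<rho> m > 0" for m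
      proof -
        have "W m * (e m)^2 < W s / 1024" using small m by simp
        also have "\<dots> < B / 4" using B Ws by simp
        also have "\<dots> \<le> W m * (\<rho> m / 2)^2" using m(3) by (simp add: power_divide)
        finally have "(e m)^2 < (\<rho> m / 2)^2" using Wp[of m] m by simp
        thus ?thesis by (rule power2_less_imp_less) (use m in simp)
      qed
      have Q: "\<rho> (s+1+n) > 33/32 \<and> a (s+1+n) > 0 \<and> W (s+1+n) * (\<rho> (s+1+n))^2 \<ge> B" if "s+1+n \<le> N" for n
        using that
      proof (induction n)
        case 0 thus ?case using r1 as1 unfolding B_def by simp
      next
        case (Suc n)
        define m where "m = s+1+n"
        have m: "1 \<le> m" "m < N" "s + 1 + Suc n = m + 1" using Suc.prems s unfolding m_def by auto
        have IH: "\<rho> m > 33/32" "a m > 0" "W m * (\<rho> m)^2 \<ge> B" using Suc m unfolding m_def by auto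
        have gm: "\<psi> m = \<rho> m" using good[of m] m IH unfolding bad_def by auto
        have em: "e m < \<rho> m / 2" using ehalf[of m] m IH by simp
        have cm: "0 < c (m+1)" "c (m+1) \<le> 1" using cb[of "m+1"] m by auto
        have "c (m+1) * a (m+1) = a m + \<psi> m - e m" using R1[of m] m by simp
        hence ca: "c (m+1) * a (m+1) > \<rho> m / 2" using gm em IH by linarith
        have am: "a (m+1) > \<rho> m / 2"
        proof -
          have "0 < c (m+1) * a (m+1)" using ca IH by linarith
          hence "a (m+1) > 0" using cm by (simp add: zero_less_mult_iff)
          hence "c (m+1) * a (m+1) \<le> 1 * a (m+1)" using cm by (intro mult_right_mono) auto
          thus ?thesis using ca by simp
        qed
        have rm: "\<rho> (m+1) > 3/2 * \<rho> m" using ra[of "m+1"] m am by simp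
        have "(3/2 * \<rho> m)^2 \<le> (\<rho> (m+1))^2" using rm IH by (intro power_mono) auto
        moreover have "(3/2 * \<rho> m)^2 = 9/4 * (\<rho> m)^2" by (simp add: power_mult_distrib power_divide)
        ultimately have sq: "9/4 * (\<rho> m)^2 \<le> (\<rho> (m+1))^2" by linarith
        have Wm1: "W (m+1) \<ge> 49/64 * W m" using Wc[of m] m by simp
        have "W m * (\<rho> m)^2 \<le> (49/64 * W m) * (9/4 * (\<rho> m)^2)"
          using Wp[of m] m by (simp add: algebra_simps)
        also have "\<dots> \<le> W (m+1) * (\<rho> (m+1))^2"
          using Wm1 sq Wp[of m] m by (intro mult_mono) auto
        finally have "W (m+1) * (\<rho> (m+1))^2 \<ge> B" using IH by simp
        thus ?case using rm IH am m by simp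
      qed
      have QN: "\<rho> N > 33/32" "a N > 0" "W N * (\<rho> N)^2 \<ge> B" using Q[of "N - s - 1"] sN by auto
      have "\<psi> N = \<rho> N" using good[of N] QN s unfolding bad_def by auto
      hence "e N = a N + \<rho> N" using R2 by simp
      moreover have "e N < \<rho> N / 2" using ehalf[of N] QN s by simp
      ultimately show False using QN by simp
    qed
  qed
qed

lemma y_rec: assumes "2 \<le> m" "m \<le> T*t" shows "y_vec T t m = cc T m * y_vec T t (m-1)"
proof -
  obtain n where n: "m = Suc (Suc n)" using assms(1) by (metis add_2_eq_Suc le_Suc_ex)
  have d: "Suc n div T = (if Suc n mod T = 0 then Suc (n div T) else n div T)" by (rule div_Suc)
  have y1: "y_vec T t m = (7/8) ^ (Suc n div T)" using assms unfolding y_vec_def n by simp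
  have y2: "y_vec T t (m-1) = (7/8) ^ (n div T)" using assms unfolding y_vec_def n by simp
  have c: "cc T m = (if Suc n mod T = 0 then 7/8 else 1)" unfolding cc_def n by simp
  show ?thesis
  proof (cases "Suc n mod T = 0")
    case True thus ?thesis unfolding y1 y2 c using d by simp
  next
    case False thus ?thesis unfolding y1 y2 c using d by simp
  qed
qed

lemma cc_ge: "2 \<le> m \<Longrightarrow> cc T m \<ge> 7/8" unfolding cc_def by auto
lemma cc_le: "cc T m \<le> 1" unfolding cc_def by auto
lemma cc_pos: "2 \<le> m \<Longrightarrow> cc T m > 0" unfolding cc_def by auto

lemma yv_sq: "1 \<le> m \<Longrightarrow> m \<le> T*t \<Longrightarrow> (y_vec T t m)^2 = (49/64) ^ ((m-1) div T)"
proof -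
  assume "1 \<le> m" "m \<le> T*t"
  hence "y_vec T t m = (7/8) ^ ((m-1) div T)" unfolding y_vec_def by simp
  moreover have "((7/8::real)^k)^2 = (49/64)^k" for k by (simp add: power2_eq_square power_mult_distrib[symmetric])
  ultimately show ?thesis by simp
qed

lemma geo_block: fixes r :: real assumes "0 \<le> r" "T > 0"
  shows "(\<Sum>j<T*M. r ^ (j div T)) = T * (\<Sum>q<M. r^q)"
proof (induction M)
  case 0 thus ?case by simp
next
  case (Suc M)
  have "{..<T * Suc M} = {..<T*M} \<union> {T*M..<T*M+T}" by auto
  hence "(\<Sum>j<T*Suc M. r ^ (j div T)) = (\<Sum>j\<in>{..<T*M} \<union> {T*M..<T*M+T}. r ^ (j div T))" by simp
  also have "\<dots> = (\<Sum>j<T*M. r ^ (j div T)) + (\<Sum>j\<in>{T*M..<T*M+T}. r ^ (j div T))"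
    by (rule sum.union_disjoint) auto
  also have "(\<Sum>j\<in>{T*M..<T*M+T}. r ^ (j div T)) = (\<Sum>j\<in>{T*M..<T*M+T}. r ^ M)"
  proof (rule sum.cong)
    fix j assume j: "j \<in> {T*M..<T*M+T}"
    define b where "b = j - T*M"
    have jb: "j = T*M + b" "b < T" using j unfolding b_def by auto
    have "(T*M + b) div T = M" using jb(2) assms(2) by simp
    thus "r ^ (j div T) = r ^ M" using jb(1) by simp
  qed simp
  also have "(\<Sum>j\<in>{T*M..<T*M+T}. r ^ M) = T * r ^ M" by simp
  finally show ?case using Suc.IH by (simp add: distrib_left)
qed

lemma geo_le: fixes r :: real assumes "0 \<le> r" "r < 1" shows "(\<Sum>q<M. r^q) \<le> 1 / (1 - r)"
proof -
  have "(\<Sum>q<M. r^q) = (1 - r^M) / (1 - r)" using assms by (simp add: sum_gp_strict)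
  also have "\<dots> \<le> 1 / (1 - r)" using assms by (intro divide_right_mono) auto
  finally show ?thesis .
qed

lemma geo_tail: fixes r :: real assumes "0 \<le> r" "r < 1" "T > 0"
  shows "(\<Sum>j<n. r ^ ((k + j) div T)) \<le> T / (1 - r) * r ^ (k div T)"
proof -
  have "(\<Sum>j<n. r ^ ((k + j) div T)) \<le> (\<Sum>j<n. r ^ (k div T) * r ^ (j div T))"
  proof (rule sum_mono)
    fix j
    have "k div T + j div T \<le> (k + j) div T" using div_add1_eq[of k j T] by linarith
    hence "r ^ ((k + j) div T) \<le> r ^ (k div T + j div T)" using assms by (intro power_decreasing) auto
    thus "r ^ ((k + j) div T) \<le> r ^ (k div T) * r ^ (j div T)" by (simp add: power_add)
  qed
  also have "\<dots> = r ^ (k div T) * (\<Sum>j<n. r ^ (j div T))" by (simp add: sum_distrib_left)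
  finally have A: "(\<Sum>j<n. r ^ ((k + j) div T)) \<le> r ^ (k div T) * (\<Sum>j<n. r ^ (j div T))" .
  have "(\<Sum>j<n. r ^ (j div T)) \<le> (\<Sum>j<T*n. r ^ (j div T))"
    using assms by (intro sum_mono2) (auto simp: nat_mult_le_cancel1 intro: order_trans[of _ n])
  also have "\<dots> = T * (\<Sum>q<n. r^q)" using geo_block assms by simp
  also have "\<dots> \<le> T * (1 / (1 - r))" using geo_le assms by (intro mult_left_mono) auto
  finally have B: "(\<Sum>j<n. r ^ (j div T)) \<le> T * (1 / (1 - r))" .
  have "r ^ (k div T) * (\<Sum>j<n. r ^ (j div T)) \<le> r ^ (k div T) * (T * (1 / (1 - r)))"
    using B assms by (intro mult_left_mono) auto
  thus ?thesis using A by (simp add: algebra_simps)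
qed

lemma W_tail: assumes "T > 0" "1 \<le> s"
  shows "(\<Sum>m=s..T*t. (y_vec T t m)^2) \<le> 64/15 * T * (y_vec T t s)^2 \<or> T*t < s"
proof (cases "s \<le> T*t")
  case True
  have "(\<Sum>m=s..T*t. (y_vec T t m)^2) = (\<Sum>m=s..T*t. (49/64::real) ^ ((m-1) div T))"
    by (rule sum.cong) (use assms in \<open>auto simp: yv_sq\<close>)
  also have "\<dots> = (\<Sum>j<T*t - s + 1. (49/64::real) ^ ((s - 1 + j) div T))"
    by (rule sum.reindex_bij_witness[where j="\<lambda>m. m - s" and i="\<lambda>j. s + j"]) (use assms True in auto)
  also have "\<dots> \<le> T / (1 - 49/64) * (49/64) ^ ((s-1) div T)" by (rule geo_tail) (use assms in auto)
  also have "\<dots> = 64/15 * T * (y_vec T t s)^2" using yv_sq[of s T t] assms True by simp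
  finally show ?thesis by simp
qed simp

lemma grad_lower:
  assumes T: "T > 0" and s: "1 \<le> s" "s \<le> T*t" "bad (u s / y_vec T t s)"
    "\<And>j. 1 \<le> j \<Longrightarrow> j < s \<Longrightarrow> \<not> bad (u j / y_vec T t j)"
  shows "(\<Sum>m=1..T*t. (Gg T t u m)^2) \<ge> (y_vec T t s)^2 / 1024"
proof -
  define N where "N = T*t"
  define y where "y = y_vec T t"
  define \<rho> where "\<rho> = (\<lambda>m. if m = 0 then 0 else u m / y m)"
  define a where "a = (\<lambda>m. rr T u m / y m)"
  define e where "e = (\<lambda>m. Gg T t u m / y m)"
  define \<psi> where "\<psi> = (\<lambda>m. vd (y m) (u m) / y m)"
  define W where "W = (\<lambda>m. (y m)^2)"
  define c where "c = (\<lambda>m. (cc T m)^2)"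
  have yp: "\<And>m. 1 \<le> m \<Longrightarrow> m \<le> N \<Longrightarrow> y m > 0" unfolding y_def N_def using y_pos by auto
  have yr: "\<And>m. 2 \<le> m \<Longrightarrow> m \<le> N \<Longrightarrow> y m = cc T m * y (m-1)" unfolding y_def N_def using y_rec by auto
  have key: "\<exists>m\<in>{1..N}. W m * (e m)^2 \<ge> W s / 1024"
  proof (rule chain_key[where \<rho>=\<rho> and a=a and \<psi>=\<psi> and c=c])
    show "\<rho> 0 = 0" unfolding \<rho>_def by simp
    show "\<rho> m = \<rho> (m-1) + a m" if m: "1 \<le> m" "m \<le> N" for m
    proof (cases "m = 1")
      case True thus ?thesis unfolding \<rho>_def a_def rr_def by (simp add: cc_1)
    next
      case False
      hence m2: "m \<ge> 2" using m by simp
      have "y (m-1) > 0" using yp[of "m-1"] m m2 by simp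
      moreover have "cc T m > 0" using cc_pos m2 by simp
      ultimately show ?thesis unfolding \<rho>_def a_def rr_def yr[OF m2 m(2)] using m2
        by (simp add: field_simps)
    qed
    show "c (m+1) * a (m+1) = a m + \<psi> m - e m" if m: "1 \<le> m" "m < N" for m
    proof -
      have "y m > 0" using yp m by simp
      moreover have "cc T (m+1) > 0" using cc_pos[of "m+1"] m by simp
      moreover have "y (m+1) = cc T (m+1) * y m" using yr[of "m+1"] m by simp
      moreover have "Gg T t u m = rr T u m - cc T (m+1) * rr T u (m+1) + vd (y m) (u m)"
        using m unfolding Gg_def qg_def N_def y_def by simp
      ultimately show ?thesis unfolding c_def a_def \<psi>_def e_def by (simp add: field_simps power2_eq_square) (simp add: distrib_left[symmetric])
    qed
    show "a N + \<psi> N - e N = 0"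
    proof -
      have N1: "1 \<le> T*t" using s by linarith
      have "Gg T t u N = rr T u N + vd (y N) (u N)"
        using N1 unfolding Gg_def qg_def N_def y_def by simp
      thus ?thesis unfolding a_def \<psi>_def e_def by (simp add: diff_divide_distrib[symmetric] add_divide_distrib[symmetric])
    qed
    show "0 < c m \<and> c m \<le> 1" if "2 \<le> m" "m \<le> N" for m
      using cc_pos[of m T] cc_le[of T m] that unfolding c_def by (simp add: power_le_one)
    show "W m > 0" if "1 \<le> m" "m \<le> N" for m using yp[OF that] unfolding W_def by simp
    show "W (m+1) \<ge> 49/64 * W m" if m: "1 \<le> m" "m < N" for m
    proof -
      have "y (m+1) = cc T (m+1) * y m" using yr[of "m+1"] m by simp
      moreover have "cc T (m+1) \<ge> 7/8" using cc_ge[of "m+1"] m by simp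
      hence "(7/8)^2 \<le> (cc T (m+1))^2" by (intro power_mono) auto
      hence "49/64 \<le> (cc T (m+1))^2" by (simp add: power_divide)
      ultimately show ?thesis unfolding W_def using yp[of m] m
        by (simp add: power_mult_distrib mult_right_mono)
    qed
    show "W n \<le> W m" if "1 \<le> m" "m \<le> n" "n \<le> N" for m n
    proof -
      have "W (m + k) \<le> W m" if "m + k \<le> N" for k
        using that
      proof (induction k)
        case 0 thus ?case by simp
      next
        case (Suc k)
        have "y (m + Suc k) = cc T (m + Suc k) * y (m + k)" using yr[of "m + Suc k"] Suc.prems \<open>1 \<le> m\<close> by simp
        moreover have "(cc T (m + Suc k))^2 \<le> 1" using cc_le[of T "m + Suc k"] cc_pos[of "m + Suc k" T] \<open>1 \<le> m\<close>
          by (simp add: power_le_one)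
        ultimately have "W (m + Suc k) \<le> W (m + k)" unfolding W_def
          by (simp add: power_mult_distrib mult_left_le_one_le)
        thus ?case using Suc by simp
      qed
      from this[of "n - m"] that show ?thesis by simp
    qed
    show "\<psi> m = \<rho> m" if m: "1 \<le> m" "m \<le> N" "\<not> bad (\<rho> m)" for m
    proof -
      have yp': "y m > 0" using yp m by simp
      have "\<not> (31/32 * y m < u m \<and> u m \<le> 33/32 * y m)"
        using m(3) m(1) yp' unfolding bad_def \<rho>_def by (auto simp: field_simps)
      thus ?thesis unfolding \<psi>_def \<rho>_def using vd_good[OF yp'] m by simp
    qed
    show "\<psi> m \<ge> 0" if m: "1 \<le> m" "m \<le> N" "\<rho> m \<ge> 0" for m
    proof -
      have yp': "y m > 0" using yp m by simp
      hence "u m \<ge> 0" using m unfolding \<rho>_def by (simp add: zero_le_divide_iff)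
      thus ?thesis unfolding \<psi>_def using vd_nonneg yp' by simp
    qed
  qed (use s in \<open>auto simp: \<rho>_def y_def N_def\<close>)
  then obtain m where m: "m \<in> {1..N}" "W m * (e m)^2 \<ge> W s / 1024" by blast
  have "W m * (e m)^2 = (Gg T t u m)^2" unfolding W_def e_def using yp[of m] m(1)
    by (simp add: power_divide)
  hence "(Gg T t u m)^2 \<ge> (y_vec T t s)^2 / 1024" using m unfolding W_def y_def by simp
  also have "(Gg T t u m)^2 \<le> (\<Sum>m=1..T*t. (Gg T t u m)^2)"
    using m(1) unfolding N_def by (intro member_le_sum) auto
  finally show ?thesis .
qed

lemma inner_id: "(\<Sum>m=1..T*t. Gg T t u m * u m) = (\<Sum>m=1..T*t. (rr T u m)^2) + (\<Sum>m=1..T*t. vd (y_vec T t m) (u m) * u m)"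
proof -
  have "(\<Sum>m=1..T*t. Gg T t u m * u m) = (\<Sum>m=1..T*t. qg T (T*t) u m * u m + vd (y_vec T t m) (u m) * u m)"
    by (rule sum.cong) (auto simp: Gg_def algebra_simps)
  also have "\<dots> = (\<Sum>m=1..T*t. qg T (T*t) u m * u m) + (\<Sum>m=1..T*t. vd (y_vec T t m) (u m) * u m)"
    by (simp add: sum.distrib)
  also have "(\<Sum>m=1..T*t. qg T (T*t) u m * u m) = (\<Sum>m=1..T*t. rr T u m * rr T u m)"
    unfolding sbp[where a="rr T u"] qg_def ..
  finally show ?thesis by (simp add: power2_eq_square)
qed

lemma g_PL: assumes T: "T > 0"
  shows "g_fun T t u \<le> 4700 * T * (\<Sum>m=1..T*t. (Gg T t u m)^2)"
proof -
  define N where "N = T*t"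
  define y where "y = y_vec T t"
  define bd where "bd = (\<lambda>m. bad (u m / y m))"
  define G2 where "G2 = (\<Sum>m=1..N. (Gg T t u m)^2)"
  define R where "R = (\<Sum>m=1..N. (rr T u m)^2)"
  define Sg where "Sg = (\<Sum>m=1..N. if bd m then 0 else (u m)^2)"
  define X where "X = (\<Sum>m=1..N. if bd m then (u m)^2 else 0)"
  have yp: "\<And>m. 1 \<le> m \<Longrightarrow> m \<le> N \<Longrightarrow> y m > 0" unfolding y_def N_def using y_pos by auto
  have G0: "G2 \<ge> 0" unfolding G2_def by (intro sum_nonneg) auto
  have R0: "R \<ge> 0" unfolding R_def by (intro sum_nonneg) auto
  have Sg0: "Sg \<ge> 0" unfolding Sg_def by (intro sum_nonneg) auto
  have X0: "X \<ge> 0" unfolding X_def by (intro sum_nonneg) auto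
  have usq: "(\<Sum>m=1..N. (u m)^2) = Sg + X" unfolding Sg_def X_def sum.distrib[symmetric] by (rule sum.cong) auto
  define I where "I = (\<Sum>m=1..N. Gg T t u m * u m)"
  have I1: "R + Sg \<le> I"
  proof -
    have "Sg \<le> (\<Sum>m=1..N. vd (y m) (u m) * u m)"
      unfolding Sg_def
    proof (rule sum_mono)
      fix m assume m: "m \<in> {1..N}"
      have yp': "y m > 0" using yp m by auto
      show "(if bd m then 0 else (u m)^2) \<le> vd (y m) (u m) * u m"
      proof (cases "bd m")
        case True thus ?thesis using vd_bad_bound[OF yp'] by (simp add: mult.commute)
      next
        case False
        hence "\<not> (31/32 * y m < u m \<and> u m \<le> 33/32 * y m)"
          using yp' unfolding bd_def bad_def by (auto simp: field_simps)
        thus ?thesis using False vd_good[OF yp'] by (simp add: power2_eq_square)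
      qed
    qed
    thus ?thesis unfolding I_def R_def N_def inner_id y_def by simp
  qed
  have I2: "I^2 \<le> G2 * (Sg + X)"
  proof -
    have "\<bar>I\<bar> \<le> vnorm N (Gg T t u) * vnorm N u"
      using vinner_abs[of N "Gg T t u" u] unfolding I_def vinner_def by simp
    hence "\<bar>I\<bar>^2 \<le> (vnorm N (Gg T t u) * vnorm N u)^2" by (intro power_mono) auto
    thus ?thesis unfolding power_mult_distrib vnorm_sq G2_def usq by simp
  qed
  have X1: "X \<le> 4650 * T * G2"
  proof (cases "\<exists>m. 1 \<le> m \<and> m \<le> N \<and> bd m")
    case False
    hence "X = 0" unfolding X_def by (intro sum.neutral) auto
    thus ?thesis using G0 by simp
  next
    case True
    define s where "s = (LEAST m. 1 \<le> m \<and> m \<le> N \<and> bd m)"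
    have s: "1 \<le> s" "s \<le> N" "bd s" using LeastI_ex[OF True] unfolding s_def by auto
    have sm: "\<not> bd j" if "1 \<le> j" "j < s" for j
      using not_less_Least[of j "\<lambda>m. 1 \<le> m \<and> m \<le> N \<and> bd m"] that s unfolding s_def[symmetric] by auto
    have Gs: "G2 \<ge> (y s)^2 / 1024"
      unfolding G2_def N_def y_def
      by (rule grad_lower[OF T]) (use s sm in \<open>auto simp: bd_def y_def N_def\<close>)
    have "X \<le> (\<Sum>m=s..N. (33/32)^2 * (y m)^2)"
    proof -
      have "X = (\<Sum>m=s..N. if bd m then (u m)^2 else 0)"
        unfolding X_def
      proof (rule sum.mono_neutral_right)
        show "\<forall>i\<in>{1..N} - {s..N}. (if bd i then (u i)^2 else 0) = 0" using sm by auto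
      qed (use s in auto)
      also have "\<dots> \<le> (\<Sum>m=s..N. (33/32)^2 * (y m)^2)"
      proof (rule sum_mono)
        fix m assume m: "m \<in> {s..N}"
        have yp': "y m > 0" using yp m s by auto
        show "(if bd m then (u m)^2 else 0) \<le> (33/32)^2 * (y m)^2"
        proof (cases "bd m")
          case True
          hence "31/32 * y m < u m" "u m \<le> 33/32 * y m" using yp' unfolding bd_def bad_def by (auto simp: field_simps)
          hence "(u m)^2 \<le> (33/32 * y m)^2" using yp' by (intro power_mono) auto
          moreover have "(33/32 * y m)^2 = (33/32)^2 * (y m)^2" by (rule power_mult_distrib)
          ultimately show ?thesis using True by simp
        qed simp
      qed
      finally show ?thesis .
    qed
    also have "\<dots> = (33/32)^2 * (\<Sum>m=s..N. (y m)^2)" by (simp add: sum_distrib_left)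
    also have "\<dots> \<le> (33/32)^2 * (64/15 * T * (y s)^2)"
      using W_tail[OF T s(1), of t] s unfolding y_def N_def by (intro mult_left_mono) auto
    also have "\<dots> = 1089/1024 * 64/15 * 1024 * T * ((y s)^2 / 1024)" by (simp add: power_divide)
    also have "\<dots> \<le> 1089/1024 * 64/15 * 1024 * T * G2" using Gs by (intro mult_left_mono) auto
    also have "\<dots> \<le> 4650 * T * G2" using G0 by (intro mult_right_mono) auto
    finally show ?thesis .
  qed
  have S1: "R + Sg \<le> X + 2 * G2"
  proof (cases "R + Sg \<le> X")
    case True thus ?thesis using G0 by simp
  next
    case False
    have "(R + Sg)^2 \<le> I^2" using I1 R0 Sg0 by (intro power_mono) auto
    also have "\<dots> \<le> G2 * (Sg + X)" by (rule I2)
    also have "\<dots> \<le> G2 * (2 * (R + Sg))" using False R0 G0 by (intro mult_left_mono) auto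
    finally have "(R + Sg) * (R + Sg) \<le> (2 * G2) * (R + Sg)" by (simp add: power2_eq_square algebra_simps)
    moreover have "R + Sg > 0" using False X0 by simp
    ultimately have "R + Sg \<le> 2 * G2" by simp
    thus ?thesis using X0 by simp
  qed
  have ge: "g_fun T t u = 1/2 * R + (\<Sum>m=1..N. v_fun (y m) (u m))"
    unfolding g_chain[OF T] R_def N_def y_def ..
  have vs: "(\<Sum>m=1..N. v_fun (y m) (u m)) \<le> (\<Sum>m=1..N. (u m)^2 / 2)"
    by (rule sum_mono) (use yp v_le in auto)
  have us: "(\<Sum>m=1..N. (u m)^2 / 2) = (Sg + X) / 2" unfolding usq[symmetric] by (simp add: sum_divide_distrib)
  have a1: "g_fun T t u \<le> 1/2 * R + (\<Sum>m=1..N. (u m)^2 / 2)" using ge vs by linarith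
  have a2: "g_fun T t u \<le> 1/2 * R + (Sg + X) / 2" using a1 us by linarith
  have "g_fun T t u \<le> (R + Sg + X) / 2" using a2 by (simp add: add_divide_distrib)
  also have "\<dots> \<le> X + G2" using S1 by simp
  also have "\<dots> \<le> 4650 * T * G2 + T * G2"
  proof -
    have "1 * G2 \<le> real T * G2" using G0 T by (intro mult_right_mono) auto
    thus ?thesis using X1 by linarith
  qed
  also have "\<dots> \<le> 4700 * T * G2" using G0 by (simp add: algebra_simps)
  finally show ?thesis unfolding G2_def N_def by simp
qed

lemma g_nonneg: assumes T: "T > 0" shows "g_fun T t u \<ge> 0"
proof -
  have "0 \<le> (\<Sum>m=1..T*t. (rr T u m)^2)" by (intro sum_nonneg) auto
  moreover have "0 \<le> (\<Sum>m=1..T*t. v_fun (y_vec T t m) (u m))"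
    by (intro sum_nonneg) (auto intro!: v_nonneg y_pos)
  ultimately show ?thesis unfolding g_chain[OF T] by simp
qed

lemma g_zero: assumes T: "T > 0" shows "g_fun T t (\<lambda>_. 0) = 0"
  unfolding g_chain[OF T] rr_def by (simp add: v_zero y_pos)

lemma sc_pos: "T > 0 \<Longrightarrow> L > 0 \<Longrightarrow> D > 0 \<Longrightarrow> sc L D T > 0" unfolding sc_def by simp
lemma be_pos: "T > 0 \<Longrightarrow> D > 0 \<Longrightarrow> be D T > 0" unfolding be_def by simp

lemma gt_nonneg: "T > 0 \<Longrightarrow> L > 0 \<Longrightarrow> D > 0 \<Longrightarrow> g_tilde L D T t x \<ge> 0"
  unfolding gt_eq by (intro mult_nonneg_nonneg less_imp_le[OF sc_pos] g_nonneg) auto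

definition xstar :: "real \<Rightarrow> nat \<Rightarrow> nat \<Rightarrow> nat \<Rightarrow> real" where
  "xstar D T t = (\<lambda>i. y_vec T t i / be D T)"

lemma xstar_vecs: "xstar D T t \<in> vecs (T*t)" unfolding xstar_def vecs_def y_vec_def by auto

lemma gt_xstar: assumes "T > 0" "L > 0" "D > 0" shows "g_tilde L D T t (xstar D T t) = 0"
proof -
  have "ug T t D (xstar D T t) = (\<lambda>_. 0)" unfolding ug_def xstar_def using be_pos[OF assms(1,3)] by auto
  thus ?thesis unfolding gt_eq using g_zero[OF assms(1)] by simp
qed

lemma gt_Inf: assumes "T > 0" "L > 0" "D > 0" shows "Inf (g_tilde L D T t ` vecs (T*t)) = 0"
  by (rule cInf_eq_minimum) (use gt_xstar[OF assms] xstar_vecs gt_nonneg[OF assms] in \<open>force+\<close>)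

lemma gt_PL: fixes T t :: nat and L D \<mu> :: real assumes T: "T > 0" and L: "L > 0" and D: "D > 0" and mu: "\<mu> > 0" and TL: "347800 * \<mu> * T \<le> L"
  shows "PL_cond (T*t) \<mu> (g_tilde L D T t)"
  unfolding PL_cond_def
proof (intro conjI ballI)
  show "differentiable_Rn (T*t) (g_tilde L D T t)" by (rule gt_diff[OF T L D])
  show "bdd_below (g_tilde L D T t ` vecs (T*t))" using gt_nonneg[OF T L D] by (intro bdd_belowI[of _ 0]) auto
  fix x assume "x \<in> vecs (T*t)"
  define u where "u = ug T t D x"
  define G2 where "G2 = (\<Sum>m=1..T*t. (Gg T t u m)^2)"
  have G0: "G2 \<ge> 0" unfolding G2_def by (intro sum_nonneg) auto
  have sp: "sc L D T > 0" by (rule sc_pos[OF T L D])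
  have bp: "be D T > 0" by (rule be_pos[OF T D])
  have "(vnorm (T*t) (grad (T*t) (g_tilde L D T t) x))^2 = (sc L D T * be D T)^2 * G2"
  proof -
    have "vnorm (T*t) (grad (T*t) (g_tilde L D T t) x) = sc L D T * be D T * vnorm (T*t) (Gg T t u)"
      unfolding gt_grad[OF T L D] Gt_def u_def vnorm_scale using sp bp by simp
    thus ?thesis unfolding G2_def by (simp add: power_mult_distrib vnorm_sq)
  qed
  also have "(sc L D T * be D T)^2 * G2 = sc L D T * (L / 37) * G2"
    using sc_be[OF T D, of L] by (simp add: power2_eq_square algebra_simps)
  also have "sc L D T * (L / 37) * G2 \<ge> sc L D T * (2 * \<mu> * (4700 * T * G2))"
  proof -
    have "2 * \<mu> * (4700 * T) \<le> L / 37" using TL by simp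
    hence "2 * \<mu> * (4700 * T) * G2 \<le> L / 37 * G2" using G0 by (intro mult_right_mono) auto
    hence "sc L D T * (2 * \<mu> * (4700 * T) * G2) \<le> sc L D T * (L / 37 * G2)" using sp by (intro mult_left_mono) auto
    thus ?thesis by (simp add: algebra_simps)
  qed
  moreover have "g_tilde L D T t x - Inf (g_tilde L D T t ` vecs (T*t)) \<le> sc L D T * (4700 * T * G2)"
    unfolding gt_Inf[OF T L D] gt_eq u_def[symmetric] G2_def using g_PL[OF T, of t u] sp
    by (simp add: mult_left_mono)
  ultimately show "2 * \<mu> * (g_tilde L D T t x - Inf (g_tilde L D T t ` vecs (T*t)))
      \<le> (vnorm (T*t) (grad (T*t) (g_tilde L D T t) x))^2"
    using mu by (smt (verit) mult_left_mono mult.assoc mult.commute)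
qed

lemma Gt_support: assumes T: "T > 0" and x: "\<And>i. i > k \<Longrightarrow> x i = 0" and i: "i \<ge> k + 2"
  shows "Gt L D T t x i = 0"
proof (cases "1 \<le> i \<and> i \<le> T*t")
  case False thus ?thesis unfolding Gt_def Gg_def by auto
next
  case True
  define u where "u = ug T t D x"
  have uy: "u j = y_vec T t j" if "j > k" for j unfolding u_def ug_def using x[OF that] by simp
  have r1: "rr T u i = 0"
    using y_rec[of i T t] True i uy[of i] uy[of "i-1"] unfolding rr_def by simp
  have r2: "rr T u (i+1) = 0" if "i < T*t"
    using y_rec[of "i+1" T t] that i uy[of i] uy[of "i+1"] unfolding rr_def by simp
  have "Gg T t u i = 0"
    unfolding Gg_def qg_def using True r1 r2 uy[of i] i vd_at_y[OF y_pos[of i T t]] by auto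
  thus ?thesis unfolding Gt_def u_def by simp
qed

lemma iterate_support:
  assumes T: "T > 0" and L: "L > 0" and D: "D > 0" and A: "zero_respecting (T*t) A"
  shows "i > n \<Longrightarrow> iterate (T*t) A (g_tilde L D T t) (\<lambda>_. 0) n i = 0"
proof (induction n arbitrary: i rule: less_induct)
  case (less n)
  show ?case
  proof (cases "n = 0")
    case True thus ?thesis unfolding iterate_def by simp
  next
    case False
    have sub: "supp (\<lambda>i. iterate (T*t) A (g_tilde L D T t) (\<lambda>_. 0) n i - 0) \<subseteq>
        (\<Union>j<n. supp (grad (T*t) (g_tilde L D T t) (iterate (T*t) A (g_tilde L D T t) (\<lambda>_. 0) j)))"
    proof -
      have z: "(\<lambda>_. 0::real) \<in> vecs (T*t)" unfolding vecs_def by simp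
      have n1: "1 \<le> n" using False by simp
      show ?thesis using A gt_diff[OF T L D] z n1 unfolding zero_respecting_def by blast
    qed
    have "i \<notin> supp (grad (T*t) (g_tilde L D T t) (iterate (T*t) A (g_tilde L D T t) (\<lambda>_. 0) j))" if j: "j < n" for j
    proof -
      have "Gt L D T t (iterate (T*t) A (g_tilde L D T t) (\<lambda>_. 0) j) i = 0"
        by (rule Gt_support[OF T, where k=j]) (use less.IH[OF j] less.prems j in auto)
      thus ?thesis unfolding gt_grad[OF T L D] supp_def by simp
    qed
    hence "i \<notin> supp (\<lambda>i. iterate (T*t) A (g_tilde L D T t) (\<lambda>_. 0) n i - 0)" using sub by blast
    thus ?thesis unfolding supp_def by simp
  qed
qed

lemma gap_lower: assumes T: "T > 0" and x: "\<And>i. i > k \<Longrightarrow> x i = 0" and q: "k div T + 2 \<le> t"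
  shows "g_fun T t (ug T t D x) \<ge> 31/64 * T * (49/64) ^ (k div T + 1)"
proof -
  define q where "q = k div T + 1"
  define u where "u = ug T t D x"
  have uy: "u j = y_vec T t j" if "j > k" for j unfolding u_def ug_def using x[OF that] by simp
  have kq: "k < q * T"
  proof -
    have "k div T * T + k mod T = k" by (rule div_mult_mod_eq)
    moreover have "k mod T < T" using T by simp
    moreover have "q * T = k div T * T + T" unfolding q_def by simp
    ultimately show ?thesis by linarith
  qed
  have B: "{q*T+1..q*T+T} \<subseteq> {1..T*t}"
  proof -
    have "q*T + T = (q+1)*T" by simp
    also have "\<dots> \<le> t * T" using q unfolding q_def by (intro mult_right_mono) auto
    finally show ?thesis by (auto simp: mult.commute)
  qed
  have "(\<Sum>m\<in>{q*T+1..q*T+T}. v_fun (y_vec T t m) (u m)) \<le> (\<Sum>m=1..T*t. v_fun (y_vec T t m) (u m))"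
    by (rule sum_mono2) (use B in \<open>auto intro!: v_nonneg y_pos\<close>)
  moreover have "(\<Sum>m\<in>{q*T+1..q*T+T}. v_fun (y_vec T t m) (u m)) = (\<Sum>m\<in>{q*T+1..q*T+T}. 31/64 * (49/64)^q)"
  proof (rule sum.cong)
    fix m assume m: "m \<in> {q*T+1..q*T+T}"
    have mk: "m > k" using m kq by auto
    have mB: "1 \<le> m" "m \<le> T*t" using m B by auto
    have "(m - 1) div T = q"
    proof -
      define r where "r = m - 1 - q*T"
      have e: "m - 1 = r + q*T" "r < T" using m unfolding r_def by auto
      have "(r + q*T) div T = q + r div T" using T by simp
      moreover have "r div T = 0" using e(2) by simp
      ultimately show ?thesis using e(1) by simp
    qed
    hence "(y_vec T t m)^2 = (49/64)^q" using yv_sq[OF mB] by simp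
    thus "v_fun (y_vec T t m) (u m) = 31/64 * (49/64)^q"
      using uy[OF mk] v_at_y[OF y_pos[OF mB]] by simp
  qed simp
  moreover have "(\<Sum>m\<in>{q*T+1..q*T+T}. 31/64 * (49/64::real)^q) = T * (31/64 * (49/64)^q)" by simp
  moreover have "0 \<le> (\<Sum>m=1..T*t. (rr T u m)^2)" by (intro sum_nonneg) auto
  ultimately show ?thesis unfolding g_chain[OF T] u_def[symmetric] q_def[symmetric] by simp
qed

lemma gy_upper: assumes T: "T > 0" and t: "t > 0" shows "g_fun T t (ug T t D (\<lambda>_. 0)) \<le> 3 * T"
proof -
  have u: "ug T t D (\<lambda>_. 0) = y_vec T t" unfolding ug_def by simp
  have N1: "1 \<le> T*t" using T t by simp
  have rr0: "rr T (y_vec T t) m = 0" if "2 \<le> m" "m \<le> T*t" for m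
    using y_rec[OF that] unfolding rr_def by simp
  have rr1: "rr T (y_vec T t) 1 = 1" unfolding rr_def using N1 by (simp add: cc_1 y_vec_def)
  have "(\<Sum>m=1..T*t. (rr T (y_vec T t) m)^2) = (rr T (y_vec T t) 1)^2 + (\<Sum>m=2..T*t. (rr T (y_vec T t) m)^2)"
    using N1 by (subst sum.atLeast_Suc_atMost) (auto simp: numeral_2_eq_2)
  also have "(\<Sum>m=2..T*t. (rr T (y_vec T t) m)^2) = 0" using rr0 by (intro sum.neutral) auto
  finally have R: "(\<Sum>m=1..T*t. (rr T (y_vec T t) m)^2) = 1" using rr1 by simp
  have "(\<Sum>m=1..T*t. v_fun (y_vec T t m) (y_vec T t m)) = (\<Sum>m=1..T*t. 31/64 * (y_vec T t m)^2)"
  proof (rule sum.cong)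
    fix m assume "m \<in> {1..T*t}"
    hence "y_vec T t m > 0" using y_pos by auto
    thus "v_fun (y_vec T t m) (y_vec T t m) = 31/64 * (y_vec T t m)^2" by (rule v_at_y)
  qed simp
  also have "\<dots> = 31/64 * (\<Sum>m=1..T*t. (y_vec T t m)^2)" by (simp add: sum_distrib_left)
  also have "\<dots> \<le> 31/64 * (64/15 * T * (y_vec T t 1)^2)"
    using W_tail[OF T, of 1 t] N1 by (intro mult_left_mono) auto
  also have "\<dots> = 31/15 * T" using N1 by (simp add: y_vec_def)
  finally have V: "(\<Sum>m=1..T*t. v_fun (y_vec T t m) (y_vec T t m)) \<le> 31/15 * T" .
  have "real T \<ge> 1" using T by simp
  thus ?thesis unfolding g_chain[OF T] u R using V by simp
qed

lemma exp_bound: fixes L :: real and Q :: nat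
  assumes L: "L \<ge> 4" and Q: "real Q \<le> L/4 + 1"
  shows "3 * exp (-L) < 31/64 * (49/64)^Q"
proof -
  have e1: "exp (1/2::real) \<ge> 3/2" using exp_ge_add_one_self[of "1/2::real"] by simp
  have h1: "exp (-1/2::real) \<le> 49/64"
  proof -
    have "exp (-1/2::real) = 1 / exp (1/2)" using exp_minus_inverse[of "1/2::real"] by (simp add: eq_divide_eq mult.commute)
    also have "\<dots> \<le> 1 / (3/2)" using e1 by (intro divide_left_mono) auto
    finally show ?thesis by simp
  qed
  have h2: "exp (- real Q / 2) \<le> (49/64)^Q"
  proof -
    have "exp (- real Q / 2) = exp (-1/2) ^ Q" using exp_of_nat_mult[of Q "-1/2::real"] by simp
    also have "\<dots> \<le> (49/64)^Q" using h1 by (intro power_mono) auto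
    finally show ?thesis .
  qed
  have h3: "exp (-L/8 - 1/2) \<le> exp (- real Q / 2)" using Q by simp
  have h4: "exp (7*L/8 - 1/2) > 192/31"
  proof -
    have "1 + 3 + 3^2/2 \<le> exp (3::real)" by (rule exp_lower_Taylor_quadratic) simp
    also have "\<dots> \<le> exp (7*L/8 - 1/2)" using L by simp
    finally show ?thesis by simp
  qed
  have h5: "exp (-L) * exp (7*L/8 - 1/2) = exp (-L/8 - 1/2)" by (simp add: exp_add[symmetric])
  have "3 * exp (-L) * (192/31) < 3 * exp (-L) * exp (7*L/8 - 1/2)" using h4 by simp
  hence "3 * exp (-L) * (192/31) < 3 * exp (-L/8 - 1/2)" using h5 by (simp add: mult.assoc)
  hence "3 * exp (-L) < 31/64 * exp (-L/8 - 1/2)" by simp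
  also have "\<dots> \<le> 31/64 * (49/64)^Q" using order_trans[OF h3 h2] by simp
  finally show ?thesis .
qed

lemma ln_ge4: fixes \<epsilon> :: real assumes "0 < \<epsilon>" "\<epsilon> < 0.01" shows "ln (1/\<epsilon>) \<ge> 4"
proof -
  have a: "exp (-1/4::real) \<ge> 3/4" using exp_ge_add_one_self[of "-1/4::real"] by simp
  have b: "exp (1/4::real) \<le> 4/3"
  proof -
    have "exp (1/4::real) = 1 / exp (-1/4)" using exp_minus_inverse[of "1/4::real"] by (simp add: eq_divide_eq)
    also have "\<dots> \<le> 1 / (3/4)" using a by (intro divide_left_mono) auto
    finally show ?thesis by simp
  qed
  have "exp (4::real) = exp (1/4) ^ 16" using exp_of_nat_mult[of 16 "1/4::real"] by simp
  also have "\<dots> \<le> (4/3) ^ 16" using b by (intro power_mono) auto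
  also have "\<dots> < 100" by (simp add: power_divide)
  also have "100 < 1/\<epsilon>" using assms by (simp add: field_simps)
  finally have "exp 4 < 1/\<epsilon>" .
  moreover have "exp (ln (1/\<epsilon>)) = 1/\<epsilon>" using assms by simp
  ultimately have "exp 4 < exp (ln (1/\<epsilon>))" by simp
  thus ?thesis by simp
qed

theorem theorem2:
  shows "\<exists>C4 c :: real. C4 > 0 \<and> c > 0 \<and>
    (\<forall>L \<mu> \<epsilon> D :: real. L \<ge> \<mu> \<longrightarrow> \<mu> > 0 \<longrightarrow> L / \<mu> > C4 \<longrightarrow>
       0 < \<epsilon> \<longrightarrow> \<epsilon> < 0.01 \<longrightarrow> D > 0 \<longrightarrow>
       (\<exists>T t :: nat. 0 < T \<and> 0 < t \<and>
          L_smooth (T*t) L (g_tilde L D T t) \<and>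
          PL_cond (T*t) \<mu> (g_tilde L D T t) \<and>
          (\<forall>A k. zero_respecting (T*t) A \<longrightarrow>
             g_tilde L D T t (iterate (T*t) A (g_tilde L D T t) (\<lambda>_. 0) k)
               - Inf (g_tilde L D T t ` vecs (T*t))
             \<le> \<epsilon> * (g_tilde L D T t (\<lambda>_. 0) - Inf (g_tilde L D T t ` vecs (T*t)))
             \<longrightarrow> real k \<ge> c * (L / \<mu>) * ln (1 / \<epsilon>))))"
proof (rule exI[of _ "1000000::real"], rule exI[of _ "1/3200000::real"], intro conjI allI impI)
  fix L \<mu> \<epsilon> D :: real
  assume Lmu: "L \<ge> \<mu>" and mu: "\<mu> > 0" and kap: "L / \<mu> > 1000000" and e0: "0 < \<epsilon>" and e1: "\<epsilon> < 0.01"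
    and D: "D > 0"
  define \<kappa> where "\<kappa> = L / \<mu>"
  define T where "T = nat \<lfloor>\<kappa> / 400000\<rfloor>"
  define Le where "Le = ln (1 / \<epsilon>)"
  define t where "t = nat \<lceil>Le\<rceil> + 2"
  have L: "L > 0" using Lmu mu by simp
  have k0: "\<kappa> > 1000000" using kap unfolding \<kappa>_def .
  have Treal: "real T = of_int \<lfloor>\<kappa> / 400000\<rfloor>" unfolding T_def using k0 by simp
  have T1: "real T \<le> \<kappa> / 400000" unfolding Treal by (rule of_int_floor_le)
  have T2: "real T \<ge> \<kappa> / 800000"
  proof -
    have "\<kappa> / 400000 - 1 < real T" unfolding Treal by linarith
    thus ?thesis using k0 by simp
  qed
  have T0: "T > 0" using T2 k0 by (simp flip: of_nat_0_less_iff)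
  have t0: "t > 0" unfolding t_def by simp
  have TL: "347800 * \<mu> * T \<le> L"
  proof -
    have "\<mu> * T \<le> \<mu> * (\<kappa> / 400000)" using T1 mu by (intro mult_left_mono) auto
    also have "\<dots> = L / 400000" unfolding \<kappa>_def using mu by simp
    finally show ?thesis using L by simp
  qed
  have Le4: "Le \<ge> 4" unfolding Le_def using ln_ge4 e0 e1 by simp
  show "\<exists>T t :: nat. 0 < T \<and> 0 < t \<and>
          L_smooth (T*t) L (g_tilde L D T t) \<and>
          PL_cond (T*t) \<mu> (g_tilde L D T t) \<and>
          (\<forall>A k. zero_respecting (T*t) A \<longrightarrow>
             g_tilde L D T t (iterate (T*t) A (g_tilde L D T t) (\<lambda>_. 0) k)
               - Inf (g_tilde L D T t ` vecs (T*t))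
             \<le> \<epsilon> * (g_tilde L D T t (\<lambda>_. 0) - Inf (g_tilde L D T t ` vecs (T*t)))
             \<longrightarrow> real k \<ge> 1/3200000 * (L / \<mu>) * ln (1 / \<epsilon>))"
  proof (rule exI[of _ T], rule exI[of _ t], intro conjI allI impI)
    show "0 < T" by (rule T0)
    show "0 < t" by (rule t0)
    show "L_smooth (T*t) L (g_tilde L D T t)" by (rule gt_smooth[OF T0 L D])
    show "PL_cond (T*t) \<mu> (g_tilde L D T t)" by (rule gt_PL[OF T0 L D mu TL])
    fix A k
    assume A: "zero_respecting (T*t) A"
      and H: "g_tilde L D T t (iterate (T*t) A (g_tilde L D T t) (\<lambda>_. 0) k)
               - Inf (g_tilde L D T t ` vecs (T*t))
             \<le> \<epsilon> * (g_tilde L D T t (\<lambda>_. 0) - Inf (g_tilde L D T t ` vecs (T*t)))"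
    show "real k \<ge> 1/3200000 * (L / \<mu>) * ln (1 / \<epsilon>)"
    proof (rule ccontr)
      assume "\<not> ?thesis"
      hence kl: "real k < \<kappa> / 3200000 * Le" unfolding \<kappa>_def Le_def by simp
      have "\<kappa> / 3200000 * Le \<le> real T / 4 * Le" using T2 Le4 by (intro mult_right_mono) auto
      hence "real k < real T / 4 * Le" using kl by linarith
      hence kT: "real k < real T * Le / 4" by simp
      define q where "q = k div T"
      have "real q * real T \<le> real k"
      proof -
        have "q * T \<le> k" unfolding q_def by simp
        thus ?thesis by (metis of_nat_le_iff of_nat_mult)
      qed
      hence "real q * real T < real T * (Le / 4)" using kT by simp
      hence q4: "real q < Le / 4" using T0 by (simp add: mult.commute)
      have qt: "k div T + 2 \<le> t"
      proof -
        have "real q < of_int \<lceil>Le\<rceil>" using q4 Le4 le_of_int_ceiling[of Le] by linarith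
        hence "q < nat \<lceil>Le\<rceil>" by linarith
        thus ?thesis unfolding t_def q_def by simp
      qed
      define xk where "xk = iterate (T*t) A (g_tilde L D T t) (\<lambda>_. 0) k"
      have van: "\<And>i. i > k \<Longrightarrow> xk i = 0" unfolding xk_def using iterate_support[OF T0 L D A] by blast
      have glow: "g_fun T t (ug T t D xk) \<ge> 31/64 * T * (49/64) ^ (q + 1)"
        using gap_lower[OF T0 van qt, where D=D] unfolding q_def by simp
      have sp: "sc L D T > 0" by (rule sc_pos[OF T0 L D])
      have "sc L D T * g_fun T t (ug T t D xk) \<le> \<epsilon> * (sc L D T * g_fun T t (ug T t D (\<lambda>_. 0)))"
        using H unfolding xk_def[symmetric] gt_Inf[OF T0 L D] gt_eq by simp
      hence "g_fun T t (ug T t D xk) \<le> \<epsilon> * g_fun T t (ug T t D (\<lambda>_. 0))" using sp by (simp add: algebra_simps)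
      also have "\<dots> \<le> \<epsilon> * (3 * T)" using gy_upper[OF T0 t0, where D=D] e0 by (intro mult_left_mono) auto
      finally have "31/64 * T * (49/64) ^ (q + 1) \<le> \<epsilon> * (3 * T)" using glow by linarith
      hence "real T * (31/64 * (49/64) ^ (q + 1)) \<le> real T * (3 * \<epsilon>)" by (simp add: algebra_simps)
      hence c1: "31/64 * (49/64) ^ (q + 1) \<le> 3 * \<epsilon>" using T0 by simp
      have "real (q + 1) \<le> Le / 4 + 1" using q4 by simp
      from exp_bound[OF Le4 this] have "3 * exp (- Le) < 31/64 * (49/64) ^ (q + 1)" .
      moreover have "exp (- Le) = \<epsilon>" unfolding Le_def using e0 by (simp add: ln_div)
      ultimately show False using c1 by simp
    qed
  qed
qed (simp_all)

end
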